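(* In the oracle setting below with $K=3$ populations (sizes $n_1,n_2,n_3$, $n=n_1+n_2+n_3$), run Algorithm BS* on $\mathcal D$, and consider the conditions (A1) $(n_2-n_1)d(\widehat P_1,\widehat P_2)+n_3\{d(\widehat P_1,\widehat P_3)-d(\widehat P_2,\widehat P_3)\}\ge 0$; (A2) $(n_3-n_1)d(\widehat P_1,\widehat P_3)+n_2\{d(\widehat P_1,\widehat P_2)-d(\widehat P_2,\widehat P_3)\}\ge 0$; (A3) $n_1(n_2+n_3-1)\{d(\widehat P_1,\widehat P_3)-d(\widehat P_1,\widehat P_2)\}+(n_3-n_2)(n_1+1)d(\widehat P_2,\widehat P_3)\ge 0$. Then: (a) In the first iteration, transferring an observation from population 1 maximizes $d_w^*(C_1^{(1)},C_2^{(1)})$ if and only if (A1) and (A2) both hold. Furthermore, if (A1) and (A2) hold (and the first transferred observation is from population 1), then in each of the first $n_1$ iterations an observation from population 1 is transferred to $C_1$, and $d_w^*(C_1^{(r)},C_2^{(r)})$ is increasing in $r$ for $r=1,\dots,n_1$. (b) Under (A1) and (A2) (with the first $n_1$ iterations transferring the observations of population 1), transferring an observation from population 2 at iteration $n_1+1$ maximizes $d_w^*(C_1^{(n_1+1)},C_2^{(n_1+1)})$ if and only if (A3) holds. Furthermore, if (A1), (A2), (A3) hold, observations from population 2 are transferred to $C_1$ at iterations $n_1+1,\dots,n_1+n_2$, and $r\mapsto d_w^*(C_1^{(r)},C_2^{(r)})$ is convex on $\{n_1,\dots,n_1+n_2\}$. (c) Under (A1), (A2), (A3), $r\mapsto d_w^*(C_1^{(r)},C_2^{(r)})$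 is decreasing for $r\ge n_1+n_2$.
   Context: Let $k$ be a characteristic kernel on a separable metric space $\mathcal X$ and, for Borel probability measures $P,Q$, $d(P,Q)=\iint k\,dP\,dP+\iint k\,dQ\,dQ-2\iint k\,dP\,dQ$ (squared MMD). Oracle setting: $\mathcal D=\mathcal D_1\cup\dots\cup\mathcal D_K$ (disjoint), $\mathcal D_i$ the $n_i$ observations from population $i$, $\widehat P_i$ the empirical distribution of $\mathcal D_i$, the $\widehat P_i$ being pairwise distinct. For nonempty $S\subseteq\mathcal D$ with $m_i=|S\cap\mathcal D_i|$, $\widetilde P_S=\sum_i\frac{m_i}{|S|}\widehat P_i$; for disjoint nonempty $S_1,S_2$, $d_w^*(S_1,S_2)=\frac{|S_1||S_2|}{|S_1|+|S_2|}d(\widetilde P_{S_1},\widetilde P_{S_2})$. Algorithm BS* on $\mathcal E$: $C_1^{(0)}=\emptyset$, $C_2^{(0)}=\mathcal E$; for $r=1,\dots,|\mathcal E|-1$ choose $c\in C_2^{(r-1)}$ maximizing $d_w^*(C_1^{(r-1)}\cup\{c\},C_2^{(r-1)}\setminus\{c\})$ and set $C_1^{(r)}=C_1^{(r-1)}\cup\{c\}$, $C_2^{(r)}=C_2^{(r-1)}\setminus\{c\}$. "An observation from population $i$ is transferred at iteration $r$" means the chosen $c$ lies in $\mathcal D_i$. *)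

theory Defs
  imports "HOL-Probability.Probability"
begin

definition mmd2 :: "('a::topological_space \<Rightarrow> 'a \<Rightarrow> real) \<Rightarrow> 'a measure \<Rightarrow> 'a measure \<Rightarrow> real" where
  "mmd2 k P Q =
     (\<integral>x. (\<integral>y. k x y \<partial>P) \<partial>P) + (\<integral>x. (\<integral>y. k x y \<partial>Q) \<partial>Q)
     - 2 * (\<integral>x. (\<integral>y. k x y \<partial>Q) \<partial>P)"

definition pd_kernel :: "('a \<Rightarrow> 'a \<Rightarrow> real) \<Rightarrow> bool" where
  "pd_kernel k \<longleftrightarrow> (\<forall>x y. k x y = k y x) \<and>
     (\<forall>(xs::'a list) (c::nat \<Rightarrow> real).
        0 \<le> (\<Sum>i<length xs. \<Sum>j<length xs. c i * c j * k (xs ! i) (xs ! j)))"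

definition characteristic_kernel :: "('a::topological_space \<Rightarrow> 'a \<Rightarrow> real) \<Rightarrow> bool" where
  "characteristic_kernel k \<longleftrightarrow> pd_kernel k \<and>
     (\<lambda>(x,y). k x y) \<in> borel_measurable borel \<and>
     bounded (range (\<lambda>(x,y). k x y)) \<and>
     (\<forall>P Q. prob_space P \<longrightarrow> prob_space Q \<longrightarrow> sets P = sets borel \<longrightarrow> sets Q = sets borel
        \<longrightarrow> mmd2 k P Q = 0 \<longrightarrow> P = Q)"

definition emp_pmf :: "('o \<Rightarrow> 'a) \<Rightarrow> 'o set \<Rightarrow> 'a pmf" where
  "emp_pmf X S = pmf_of_multiset (image_mset X (mset_set S))"

definition popset :: "('o \<Rightarrow> nat) \<Rightarrow> 'o set \<Rightarrow> nat \<Rightarrow> 'o set" where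
  "popset pop D i = {ob \<in> D. pop ob = i}"

text \<open>Oracle mixture: P~_S = sum_i (m_i/|S|) P^_i with m_i = |S \<inter> D_i|.\<close>
definition oracle_mix :: "('o \<Rightarrow> nat) \<Rightarrow> ('o \<Rightarrow> 'a) \<Rightarrow> 'o set \<Rightarrow> 'o set \<Rightarrow> 'a pmf" where
  "oracle_mix pop X D S =
     bind_pmf (pmf_of_multiset (image_mset pop (mset_set S))) (\<lambda>i. emp_pmf X (popset pop D i))"

definition dw_star :: "('a::topological_space \<Rightarrow> 'a \<Rightarrow> real) \<Rightarrow> ('o \<Rightarrow> nat) \<Rightarrow> ('o \<Rightarrow> 'a) \<Rightarrow> 'o set
     \<Rightarrow> 'o set \<Rightarrow> 'o set \<Rightarrow> real" where
  "dw_star k pop X D S1 S2 =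
     real (card S1) * real (card S2) / real (card S1 + card S2) *
     mmd2 k (measure_pmf (oracle_mix pop X D S1)) (measure_pmf (oracle_mix pop X D S2))"

text \<open>Algorithm BS*: a run is a choice sequence c (c r = observation chosen at iteration r);
  C_1^(r) = {c 1, ..., c r}, C_2^(r) = E - C_1^(r).\<close>
definition C1_of :: "(nat \<Rightarrow> 'o) \<Rightarrow> nat \<Rightarrow> 'o set" where
  "C1_of c r = c ` {1..r}"

definition maximizes_at :: "'o set \<Rightarrow> ('o set \<Rightarrow> 'o set \<Rightarrow> real) \<Rightarrow> 'o set \<Rightarrow> 'o \<Rightarrow> bool" where
  "maximizes_at E obj C x \<longleftrightarrow> x \<in> E - C \<and>
     (\<forall>y \<in> E - C. obj (insert y C) (E - insert y C) \<le> obj (insert x C) (E - insert x C))"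

definition BS_star_run :: "'o set \<Rightarrow> ('o set \<Rightarrow> 'o set \<Rightarrow> real) \<Rightarrow> (nat \<Rightarrow> 'o) \<Rightarrow> bool" where
  "BS_star_run E obj c \<longleftrightarrow> (\<forall>r \<in> {1..card E - 1}. maximizes_at E obj (C1_of c (r - 1)) (c r))"

end

theory Submission
  imports Defs
begin


locale gram =
  fixes n1 n2 n3 K11 K12 K13 K22 K23 K33 :: real
  assumes n1: "n1 \<ge> 1" and n2: "n2 \<ge> 1" and n3: "n3 \<ge> 1"
  assumes psd: "\<And>u1 u2 u3. 0 \<le> u1 * u1 * K11 + u2 * u2 * K22 + u3 * u3 * K33 + 2 * u1 * u2 * K12 + 2 * u1 * u3 * K13 + 2 * u2 * u3 * K23"
  assumes d12_pos: "K11 + K22 - 2 * K12 > 0"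
  assumes d13_pos: "K11 + K33 - 2 * K13 > 0"
  assumes d23_pos: "K22 + K33 - 2 * K23 > 0"
begin

definition "nn = n1 + n2 + n3"
definition "BK u1 u2 u3 v1 v2 v3 = u1* v1 * K11 + u2* v2 * K22 + u3* v3 * K33 + (u1* v2+u2* v1) * K12 + (u1* v3+u3* v1) * K13 + (u2* v3+u3* v2) * K23"
definition "p1 = n1/nn"
definition "p2 = n2/nn"
definition "p3 = n3/nn"
definition "g11 = BK (1-p1) (-p2) (-p3) (1-p1) (-p2) (-p3)"
definition "g22 = BK (-p1) (1-p2) (-p3) (-p1) (1-p2) (-p3)"
definition "g33 = BK (-p1) (-p2) (1-p3) (-p1) (-p2) (1-p3)"
definition "g12 = BK (1-p1) (-p2) (-p3) (-p1) (1-p2) (-p3)"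
definition "g13 = BK (1-p1) (-p2) (-p3) (-p1) (-p2) (1-p3)"
definition "g23 = BK (-p1) (1-p2) (-p3) (-p1) (-p2) (1-p3)"
definition "Nq a1 a2 a3 = a1 * a1 * g11 + a2 * a2 * g22 + a3 * a3 * g33 + 2 * a1 * a2 * g12 + 2 * a1 * a3 * g13 + 2 * a2 * a3 * g23"
definition "d12 = K11 + K22 - 2 * K12"
definition "d13 = K11 + K33 - 2 * K13"
definition "d23 = K22 + K33 - 2 * K23"
definition "F a1 a2 a3 = nn * Nq a1 a2 a3 / ((a1+a2+a3) * (nn - (a1+a2+a3)))"

lemmas gdefs = g11_def g12_def g13_def g22_def g23_def g33_def BK_def

lemma nn_pos: "nn > 0" using n1 n2 n3 by (simp add: nn_def)
lemma p_sum: "p1 + p2 + p3 = 1"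
  using nn_pos unfolding p1_def p2_def p3_def by (simp add: add_divide_distrib[symmetric] nn_def)
lemma n_p: "n1 = nn * p1" "n2 = nn * p2" "n3 = nn * p3"
  using nn_pos unfolding p1_def p2_def p3_def by auto

lemma c1: "p1 * g11 + p2 * g12 + p3 * g13 = 0"
  using p_sum unfolding gdefs by algebra
lemma c2: "p1 * g12 + p2 * g22 + p3 * g23 = 0"
  using p_sum unfolding gdefs by algebra
lemma c3: "p1 * g13 + p2 * g23 + p3 * g33 = 0"
  using p_sum unfolding gdefs by algebra

lemma Nq_psd: "Nq a1 a2 a3 = BK (a1 - (a1+a2+a3) * p1) (a2 - (a1+a2+a3) * p2) (a3 - (a1+a2+a3) * p3) (a1 - (a1+a2+a3) * p1) (a2 - (a1+a2+a3) * p2) (a3 - (a1+a2+a3) * p3)"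
  unfolding Nq_def gdefs by algebra

lemma BK_psd: "0 \<le> BK u1 u2 u3 u1 u2 u3"
  using psd[of u1 u2 u3] unfolding BK_def by (simp add: algebra_simps)

lemma Nq_nonneg: "0 \<le> Nq a1 a2 a3"
  unfolding Nq_psd by (rule BK_psd)

lemma g_nonneg: "0 \<le> g11" "0 \<le> g22" "0 \<le> g33"
  using Nq_nonneg[of 1 0 0] Nq_nonneg[of 0 1 0] Nq_nonneg[of 0 0 1] by (simp_all add: Nq_def)

lemma dg: "d12 = g11 + g22 - 2 * g12" "d13 = g11 + g33 - 2 * g13" "d23 = g22 + g33 - 2 * g23"
  unfolding d12_def d13_def d23_def gdefs by algebra+

lemma dpos: "d12 > 0" "d13 > 0" "d23 > 0"
  using d12_pos d13_pos d23_pos by (simp_all add: d12_def d13_def d23_def)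

lemma cn1: "n1 * g11 + n2 * g12 + n3 * g13 = 0"
proof -
  have "n1 * g11 + n2 * g12 + n3 * g13 = nn * (p1 * g11 + p2 * g12 + p3 * g13)"
    using nn_pos unfolding p1_def p2_def p3_def by (simp add: field_simps)
  then show ?thesis using c1 by simp
qed
lemma cn2: "n1 * g12 + n2 * g22 + n3 * g23 = 0"
proof -
  have "n1 * g12 + n2 * g22 + n3 * g23 = nn * (p1 * g12 + p2 * g22 + p3 * g23)"
    using nn_pos unfolding p1_def p2_def p3_def by (simp add: field_simps)
  then show ?thesis using c2 by simp
qed
lemma cn3: "n1 * g13 + n2 * g23 + n3 * g33 = 0"
proof -
  have "n1 * g13 + n2 * g23 + n3 * g33 = nn * (p1 * g13 + p2 * g23 + p3 * g33)"
    using nn_pos unfolding p1_def p2_def p3_def by (simp add: field_simps)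
  then show ?thesis using c3 by simp
qed

lemma A1id: "(n2-n1) * d12 + n3 * (d13-d23) = nn * (g11 - g22)"
proof -
  have "(n2-n1) * d12 + n3 * (d13-d23) - nn * (g11 - g22) = (-2) * (n1 * g11 + n2 * g12 + n3 * g13) + 2 * (n1 * g12 + n2 * g22 + n3 * g23)"
    unfolding dg nn_def by algebra
  then show ?thesis using cn1 cn2 by simp
qed
lemma A2id: "(n3-n1) * d13 + n2 * (d12-d23) = nn * (g11 - g33)"
proof -
  have "(n3-n1) * d13 + n2 * (d12-d23) - nn * (g11 - g33) = (-2) * (n1 * g11 + n2 * g12 + n3 * g13) + 2 * (n1 * g13 + n2 * g23 + n3 * g33)"
    unfolding dg nn_def by algebra
  then show ?thesis using cn1 cn3 by simp
qed
lemma A3id: "n1 * (n2+n3-1) * (d13-d12) + (n3-n2) * (n1+1) * d23 = nn * (2 * n1 * (g12-g13) + g22 - g33)"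
proof -
  have "n1 * (n2+n3-1) * (d13-d12) + (n3-n2) * (n1+1) * d23 - nn * (2 * n1 * (g12-g13) + g22 - g33)
     = (-2 - 2 * n1) * (n1 * g12 + n2 * g22 + n3 * g23) + (2 + 2 * n1) * (n1 * g13 + n2 * g23 + n3 * g33)"
    unfolding dg nn_def by algebra
  then show ?thesis using cn2 cn3 by simp
qed
lemma Nq_tail: "Nq n1 n2 m = (n3-m)^2 * g33"
proof -
  have "Nq n1 n2 m - (n3-m)^2 * g33 = n1 * (n1 * g11 + n2 * g12 + n3 * g13) + n2 * (n1 * g12 + n2 * g22 + n3 * g23) + (2 * m - n3) * (n1 * g13 + n2 * g23 + n3 * g33)"
    unfolding Nq_def by algebra
  then show ?thesis using cn1 cn2 cn3 by simp
qed
lemma Delta_id: "Nq n1 (j+1) 0 - Nq n1 j 1 = 2 * n1 * (g12-g13) + g22 - g33 + 2 * j * (g22-g23)"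
  unfolding Nq_def by algebra
lemma Delta_end: "2 * n1 * (g12-g13) + g22 - g33 + 2 * (n2-1) * (g22-g23) = (2 * n3-2) * (g33-g23) + (g33-g22)"
proof -
  have "2 * n1 * (g12-g13) + g22 - g33 + 2 * (n2-1) * (g22-g23) - ((2 * n3-2) * (g33-g23) + (g33-g22)) = 2 * (n1 * g12 + n2 * g22 + n3 * g23) - 2 * (n1 * g13 + n2 * g23 + n3 * g33)"
    by algebra
  then show ?thesis using cn2 cn3 by simp
qed


lemma nn_gt: "nn \<ge> 3" using n1 n2 n3 by (simp add: nn_def)

lemma F_same_denom:
  assumes "a1+a2+a3 = b1+b2+b3" "0 < a1+a2+a3" "a1+a2+a3 < nn"
  shows "F a1 a2 a3 \<le> F b1 b2 b3 \<longleftrightarrow> Nq a1 a2 a3 \<le> Nq b1 b2 b3"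
    and "F a1 a2 a3 < F b1 b2 b3 \<longleftrightarrow> Nq a1 a2 a3 < Nq b1 b2 b3"
proof -
  have pos: "0 < (a1+a2+a3) * (nn - (a1+a2+a3))" using assms by simp
  have ne: "a1+a2+a3 \<noteq> 0" "nn \<noteq> a1+a2+a3" using assms by auto
  show "F a1 a2 a3 \<le> F b1 b2 b3 \<longleftrightarrow> Nq a1 a2 a3 \<le> Nq b1 b2 b3"
    unfolding F_def assms(1)[symmetric] using pos nn_pos
    by (simp add: divide_le_cancel mult_le_cancel_left_pos)
  show "F a1 a2 a3 < F b1 b2 b3 \<longleftrightarrow> Nq a1 a2 a3 < Nq b1 b2 b3"
    unfolding F_def assms(1)[symmetric] using pos nn_pos
    by (simp add: divide_less_cancel mult_less_cancel_left_pos ne)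
qed

lemma F_first: "F 1 0 0 \<ge> F 0 1 0 \<longleftrightarrow> g11 \<ge> g22" "F 1 0 0 \<ge> F 0 0 1 \<longleftrightarrow> g11 \<ge> g33"
  using F_same_denom(1)[of 0 1 0 1 0 0] F_same_denom(1)[of 0 0 1 1 0 0] nn_gt
  by (simp_all add: Nq_def)

lemma a_step2:
  assumes "r \<ge> 1" "r + 1 < nn" "g11 \<ge> g22"
  shows "F r 1 0 < F (r+1) 0 0"
proof -
  have e: "Nq (r+1) 0 0 - Nq r 1 0 = r * d12 + (r+1) * (g11-g22)" unfolding Nq_def dg by algebra
  have "r * d12 > 0" using assms dpos by simp
  moreover have "(r+1) * (g11-g22) \<ge> 0" using assms by simp
  ultimately have "Nq r 1 0 < Nq (r+1) 0 0" using e by linarith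
  then show ?thesis using F_same_denom(2)[of r 1 0 "r+1" 0 0] assms by simp
qed

lemma a_step3:
  assumes "r \<ge> 1" "r + 1 < nn" "g11 \<ge> g33"
  shows "F r 0 1 < F (r+1) 0 0"
proof -
  have e: "Nq (r+1) 0 0 - Nq r 0 1 = r * d13 + (r+1) * (g11-g33)" unfolding Nq_def dg by algebra
  have "r * d13 > 0" using assms dpos by simp
  moreover have "(r+1) * (g11-g33) \<ge> 0" using assms by simp
  ultimately have "Nq r 0 1 < Nq (r+1) 0 0" using e by linarith
  then show ?thesis using F_same_denom(2)[of r 0 1 "r+1" 0 0] assms by simp
qed

lemma g11_pos: assumes "g11 \<ge> g22" shows "g11 > 0"
proof (rule ccontr)
  assume "\<not> g11 > 0"
  then have "g11 = 0" "g22 = 0" using g_nonneg assms by linarith+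
  moreover have "0 \<le> Nq 1 1 0" by (rule Nq_nonneg)
  ultimately have "g12 \<ge> 0" by (simp add: Nq_def)
  then show False using dpos(1) dg(1) \<open>g11 = 0\<close> \<open>g22 = 0\<close> by linarith
qed

lemma a_mono:
  assumes "g11 > 0" "1 \<le> r" "r + 1 < nn"
  shows "F r 0 0 < F (r+1) 0 0"
proof -
  have F1: "F x 0 0 = nn * g11 * (x/(nn-x))" if "x > 0" "x < nn" for x
    using that unfolding F_def Nq_def by (simp add: field_simps)
  have "r/(nn-r) < (r+1)/(nn-(r+1))"
    using assms nn_pos by (simp add: field_simps)
  then have "nn * g11 * (r/(nn-r)) < nn * g11 * ((r+1)/(nn-(r+1)))"
    using assms nn_pos by (intro mult_strict_left_mono) auto
  moreover have "F r 0 0 = nn * g11 * (r/(nn-r))" by (rule F1) (use assms in auto)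
  moreover have "F (r+1) 0 0 = nn * g11 * ((r+1)/(nn-(r+1)))" by (rule F1) (use assms in auto)
  ultimately show ?thesis by linarith
qed

definition "Delta0 = 2 * n1 * (g12-g13) + g22 - g33"

lemma b_first: "F n1 0 1 \<le> F n1 1 0 \<longleftrightarrow> 0 \<le> Delta0"
proof -
  have "Nq n1 1 0 - Nq n1 0 1 = Delta0" using Delta_id[of 0] unfolding Delta0_def by simp
  then have "Nq n1 0 1 \<le> Nq n1 1 0 \<longleftrightarrow> 0 \<le> Delta0" by arith
  then show ?thesis using F_same_denom(1)[of n1 0 1 n1 1 0] n1 n2 n3 by (simp add: nn_def)
qed

lemma b_step:
  assumes "0 \<le> Delta0" "1 \<le> j" "j \<le> n2 - 1"
  shows "F n1 j 1 < F n1 (j+1) 0"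
proof -
  have "0 < Delta0 + 2 * j * (g22-g23)"
  proof (cases "g22 > g23")
    case True then have "2 * j * (g22-g23) > 0" using assms by simp
    then show ?thesis using assms by linarith
  next
    case False
    have "g33 - g23 > 0" using dg(3) dpos(3) False by linarith
    moreover have "g33 - g22 > 0" using dg(3) dpos(3) False by linarith
    ultimately have "0 < (2 * n3-2) * (g33-g23) + (g33-g22)" using n3
      by (smt (verit) mult_nonneg_nonneg)
    then have "0 < Delta0 + 2 * (n2-1) * (g22-g23)" using Delta_end unfolding Delta0_def by simp
    moreover have "0 \<le> 2 * (j-(n2-1)) * (g22-g23)" using False assms
      by (simp add: mult_nonpos_nonpos)
    ultimately show ?thesis by (simp add: algebra_simps)
  qed
  then have "Nq n1 j 1 < Nq n1 (j+1) 0" using Delta_id[of j] unfolding Delta0_def by simp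
  then show ?thesis using F_same_denom(2)[of n1 j 1 n1 "j+1" 0] assms n1 n2 n3 by (simp add: nn_def)
qed

end

lemma quad0:
  fixes a b :: real
  assumes "a \<ge> 0" "\<And>t. 0 \<le> a * t^2 + 2 * b * t"
  shows "b = 0"
proof (rule ccontr)
  assume "b \<noteq> 0"
  define t where "t = -b/(a+1)"
  have ht: "t * (a+1) = -b" unfolding t_def using assms(1) by simp
  have "(a+1)^2 * (a * t^2+2 * b * t) = a * (t * (a+1))^2 + 2 * b * (t * (a+1)) * (a+1)" by algebra
  also have "\<dots> = -(b^2 * (a+2))" unfolding ht by algebra
  finally have e: "(a+1)^2 * (a * t^2+2 * b * t) = -(b^2 * (a+2))" .
  have "b^2 * (a+2) > 0" using \<open>b \<noteq> 0\<close> assms(1) by simp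
  then have "(a+1)^2 * (a * t^2+2 * b * t) < 0" using e by linarith
  moreover have "(a+1)^2 > 0" using assms(1) by simp
  ultimately have "a * t^2+2 * b * t < 0" by (simp add: mult_less_0_iff)
  then show False using assms(2)[of t] by linarith
qed

lemma convex_aux:
  fixes q :: "real \<Rightarrow> real" and A B C N s :: real
  assumes q: "\<And>x. q x = A * x^2 + B * x + C" and C: "C \<ge> 0" and qN: "q N \<ge> 0"
    and s1: "1 \<le> s - 1" and s2: "s + 1 \<le> N - 1"
  shows "2 * (q s/(s * (N-s))) \<le> q (s-1)/((s-1) * (N-(s-1))) + q (s+1)/((s+1) * (N-(s+1)))"
proof -
  have h: "q x/(x * (N-x)) = -A + C/N * (1/x) + q N/N * (1/(N-x))" if "0 < x" "x < N" for x
    using that unfolding q by (simp add: field_simps power2_eq_square)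
  have i1: "2 * (1/x) \<le> 1/(x-1) + 1/(x+1)" if x1: "1 \<le> x - 1" for x :: real
  proof -
    have "x * x \<ge> 2 * 2" using mult_mono[of 2 x 2 x] x1 by auto
    then have p: "x * x - 1 > 0" by simp
    have "1/(x-1) + 1/(x+1) = 2 * x/(x * x-1)" using x1 by (simp add: field_simps)
    moreover have "2 * (1/x) \<le> 2 * x/(x * x-1)" using p x1 by (simp add: field_simps)
    ultimately show ?thesis by simp
  qed
  have i2: "2 * (1/(N-s)) \<le> 1/(N-(s-1)) + 1/(N-(s+1))"
    using i1[of "N-s"] s2 by (simp add: algebra_simps)
  have N: "N > 0" using s1 s2 by simp
  have c1: "0 \<le> C/N" using C N by simp
  have c2: "0 \<le> q N/N" using qN N by simp
  have "2 * (C/N * (1/s)) \<le> C/N * (1/(s-1)) + C/N * (1/(s+1))"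
    using mult_left_mono[OF i1[OF s1] c1] by (simp add: algebra_simps)
  moreover have "2 * (q N/N * (1/(N-s))) \<le> q N/N * (1/(N-(s-1))) + q N/N * (1/(N-(s+1)))"
    using mult_left_mono[OF i2 c2] by (simp add: algebra_simps)
  ultimately show ?thesis
    using h[of s] h[of "s-1"] h[of "s+1"] s1 s2 by simp
qed

context gram begin

lemma b_convex:
  assumes "n1 + 1 \<le> r" "r + 1 \<le> n1 + n2"
  shows "2 * F n1 (r - n1) 0 \<le> F n1 (r - 1 - n1) 0 + F n1 (r + 1 - n1) 0"
proof -
  define q where "q x = Nq n1 (x - n1) 0" for x
  have q: "q x = g22 * x^2 + (2 * n1 * g12 - 2 * n1 * g22) * x + n1^2 * d12" for x
    unfolding q_def Nq_def dg by algebra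
  have "0 \<le> n1^2 * d12" using dpos by simp
  moreover have "q nn \<ge> 0" unfolding q_def by (rule Nq_nonneg)
  ultimately have cv: "2 * (q r/(r * (nn-r))) \<le> q (r-1)/((r-1) * (nn-(r-1))) + q (r+1)/((r+1) * (nn-(r+1)))"
    using convex_aux[OF q] assms n1 n3 unfolding nn_def by simp
  have Fq: "F n1 (x - n1) 0 = nn * (q x/(x * (nn-x)))" for x
    unfolding F_def q_def by simp
  define X where "X = q r/(r * (nn-r))"
  define Y where "Y = q (r-1)/((r-1) * (nn-(r-1)))"
  define Z where "Z = q (r+1)/((r+1) * (nn-(r+1)))"
  have "nn * (2 * X) \<le> nn * (Y+Z)" using mult_left_mono[OF cv, of nn] nn_pos unfolding X_def Y_def Z_def by simp
  then have "2 * (nn * X) \<le> nn * Y + nn * Z" by (simp add: algebra_simps)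
  moreover have "F n1 (r - n1) 0 = nn * X" unfolding X_def by (rule Fq)
  moreover have "F n1 (r - 1 - n1) 0 = nn * Y" unfolding Y_def by (rule Fq)
  moreover have "F n1 (r + 1 - n1) 0 = nn * Z" unfolding Z_def by (rule Fq)
  ultimately show ?thesis by linarith
qed

lemma g33_pos: assumes "0 \<le> Delta0" shows "g33 > 0"
proof (rule ccontr)
  assume "\<not> g33 > 0"
  then have z: "g33 = 0" using g_nonneg by linarith
  have "g13 = 0"
  proof (rule quad0[of g11])
    show "0 \<le> g11" using g_nonneg by simp
    fix t
    have "Nq t 0 1 = g11 * t^2 + 2 * g13 * t" using z by (simp add: Nq_def power2_eq_square)
    then show "0 \<le> g11 * t^2 + 2 * g13 * t" using Nq_nonneg[of t 0 1] by simp
  qed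
  have "g23 = 0"
  proof (rule quad0[of g22])
    show "0 \<le> g22" using g_nonneg by simp
    fix t
    have "Nq 0 t 1 = g22 * t^2 + 2 * g23 * t" using z by (simp add: Nq_def power2_eq_square)
    then show "0 \<le> g22 * t^2 + 2 * g23 * t" using Nq_nonneg[of 0 t 1] by simp
  qed
  have "n1 * g12 = - n2 * g22" using cn2 \<open>g23 = 0\<close> by simp
  then have "Delta0 = (1 - 2 * n2) * g22" unfolding Delta0_def using \<open>g13 = 0\<close> z
    by (simp add: algebra_simps)
  have "g22 \<le> 0"
  proof (rule ccontr)
    assume "\<not> g22 \<le> 0"
    then have "(1 - 2 * n2) * g22 < 0" using n2 by (intro mult_neg_pos) auto
    then show False using assms \<open>Delta0 = (1 - 2 * n2) * g22\<close> by simp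
  qed
  then have "g22 = 0" using g_nonneg by simp
  then show False using dg(3) dpos(3) z \<open>g23 = 0\<close> by simp
qed

lemma c_step:
  assumes "g33 > 0" "0 \<le> m" "m + 1 \<le> n3 - 1"
  shows "F n1 n2 (m+1) < F n1 n2 m"
proof -
  have F3: "F n1 n2 x = nn * g33 * ((n3 - x)/(n1+n2+x))" if "0 \<le> x" "x < n3" for x
  proof -
    have e: "nn - (n1+n2+x) = n3 - x" by (simp add: nn_def)
    have ne: "n3 - x \<noteq> 0" "n1+n2+x \<noteq> 0" using that n1 n2 by auto
    have "F n1 n2 x = (nn * g33 * (n3-x)) * (n3-x)/((n1+n2+x) * (n3-x))"
      unfolding F_def Nq_tail e by (simp add: power2_eq_square mult.assoc mult.left_commute)
    also have "\<dots> = nn * g33 * (n3-x)/(n1+n2+x)" using ne by simp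
    finally show ?thesis by simp
  qed
  have "(n3 - (m+1))/(n1+n2+(m+1)) < (n3 - m)/(n1+n2+m)"
    using assms n1 n2 by (simp add: field_simps)
  then have "nn * g33 * ((n3 - (m+1))/(n1+n2+(m+1))) < nn * g33 * ((n3 - m)/(n1+n2+m))"
    using assms nn_pos by (intro mult_strict_left_mono) auto
  moreover have "F n1 n2 m = nn * g33 * ((n3 - m)/(n1+n2+m))" by (rule F3) (use assms in auto)
  moreover have "F n1 n2 (m+1) = nn * g33 * ((n3 - (m+1))/(n1+n2+(m+1)))" by (rule F3) (use assms in auto)
  ultimately show ?thesis by linarith
qed


lemma BK_scale: "BK (c * x1) (c * x2) (c * x3) (d * y1) (d * y2) (d * y3) = c * d * BK x1 x2 x3 y1 y2 y3"
  unfolding BK_def by algebra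
lemma BK_diff: "BK (x1-y1) (x2-y2) (x3-y3) (x1-y1) (x2-y2) (x3-y3) = BK x1 x2 x3 x1 x2 x3 + BK y1 y2 y3 y1 y2 y3 - 2 * BK x1 x2 x3 y1 y2 y3"
  unfolding BK_def by algebra

lemma dw_formula:
  assumes s: "s = a1+a2+a3" "0 < s" "s < nn"
  shows "s * (nn-s)/nn * (BK a1 a2 a3 a1 a2 a3/s^2 + BK (n1-a1) (n2-a2) (n3-a3) (n1-a1) (n2-a2) (n3-a3)/(nn-s)^2
           - 2 * BK a1 a2 a3 (n1-a1) (n2-a2) (n3-a3)/(s * (nn-s))) = F a1 a2 a3"
proof -
  define t where "t = nn - s"
  have t: "0 < t" using s unfolding t_def by simp
  define b1 where "b1 = n1 - a1"
  define b2 where "b2 = n2 - a2"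
  define b3 where "b3 = n3 - a3"
  define c where "c = nn/(s * t)"
  have wg: "a/s - b/t = c * (a - s * pI)" if "b = nI - a" "pI = nI/nn" for a b nI pI
  proof -
    have s0: "s \<noteq> 0" "t \<noteq> 0" using s t by auto
    have "a/s - b/t = (a * t - b * s)/(s * t)" using s0 by (simp add: field_simps)
    also have "a * t - b * s = nn * (a - s * pI)"
      unfolding t_def that using nn_pos by (simp add: field_simps)
    finally show ?thesis unfolding c_def by simp
  qed
  have w: "a1/s - b1/t = c * (a1 - s * p1)" "a2/s - b2/t = c * (a2 - s * p2)" "a3/s - b3/t = c * (a3 - s * p3)"
      apply (rule wg, simp add: b1_def, simp add: p1_def)
     apply (rule wg, simp add: b2_def, simp add: p2_def)
    apply (rule wg, simp add: b3_def, simp add: p3_def)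
    done
  have sa: "BK a1 a2 a3 a1 a2 a3/s^2 = BK (a1/s) (a2/s) (a3/s) (a1/s) (a2/s) (a3/s)"
    using BK_scale[of "1/s" a1 a2 a3 "1/s" a1 a2 a3] s by (simp add: power2_eq_square)
  have sb: "BK b1 b2 b3 b1 b2 b3/t^2 = BK (b1/t) (b2/t) (b3/t) (b1/t) (b2/t) (b3/t)"
    using BK_scale[of "1/t" b1 b2 b3 "1/t" b1 b2 b3] t by (simp add: power2_eq_square)
  have sab: "BK a1 a2 a3 b1 b2 b3/(s * t) = BK (a1/s) (a2/s) (a3/s) (b1/t) (b2/t) (b3/t)"
    using BK_scale[of "1/s" a1 a2 a3 "1/t" b1 b2 b3] s t by simp
  have "BK a1 a2 a3 a1 a2 a3/s^2 + BK b1 b2 b3 b1 b2 b3/t^2 - 2 * BK a1 a2 a3 b1 b2 b3/(s * t)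
      = BK (a1/s - b1/t) (a2/s - b2/t) (a3/s - b3/t) (a1/s - b1/t) (a2/s - b2/t) (a3/s - b3/t)"
    unfolding BK_diff sa sb using sab by simp
  also have "\<dots> = c * c * Nq a1 a2 a3"
    unfolding w BK_scale Nq_psd s(1)[symmetric] by simp
  finally have e: "BK a1 a2 a3 a1 a2 a3/s^2 + BK b1 b2 b3 b1 b2 b3/t^2 - 2 * BK a1 a2 a3 b1 b2 b3/(s * t) = c * c * Nq a1 a2 a3" .
  have "s * t/nn * (c * c * Nq a1 a2 a3) = F a1 a2 a3"
    unfolding c_def F_def s(1)[symmetric] t_def[symmetric] using s(2) t nn_pos by (simp add: field_simps power2_eq_square)
  then show ?thesis using e unfolding t_def b1_def b2_def b3_def by simp
qed

end

lemma emp_pmf_eq: "finite S \<Longrightarrow> S \<noteq> {} \<Longrightarrow> emp_pmf X S = map_pmf X (pmf_of_set S)"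
  unfolding emp_pmf_def by (simp add: map_pmf_of_set)

lemma set_emp_pmf: "finite S \<Longrightarrow> S \<noteq> {} \<Longrightarrow> set_pmf (emp_pmf X S) = X ` S"
  by (simp add: emp_pmf_eq)

lemma int_emp:
  fixes h :: "'a \<Rightarrow> real"
  assumes "finite S" "S \<noteq> {}"
  shows "(\<integral>x. h x \<partial>measure_pmf (emp_pmf X S)) = (\<Sum>ob\<in>S. h (X ob)) / real (card S)"
  using assms by (simp add: emp_pmf_eq integral_pmf_of_set)

lemma oracle_mix_eq:
  assumes "finite S" "S \<noteq> {}"
  shows "oracle_mix pop X D S = bind_pmf (pmf_of_set S) (\<lambda>ob. emp_pmf X (popset pop D (pop ob)))"
  unfolding oracle_mix_def map_pmf_of_set[OF assms, symmetric] bind_map_pmf by simp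

lemma int_mix:
  fixes h :: "'a \<Rightarrow> real"
  assumes "finite S" "S \<noteq> {}"
    and fin: "\<And>ob. ob \<in> S \<Longrightarrow> finite (popset pop D (pop ob)) \<and> popset pop D (pop ob) \<noteq> {}"
  shows "(\<integral>x. h x \<partial>measure_pmf (oracle_mix pop X D S))
     = (\<Sum>ob\<in>S. \<integral>x. h x \<partial>measure_pmf (emp_pmf X (popset pop D (pop ob)))) / real (card S)"
proof -
  have "measure_pmf.expectation (bind_pmf (pmf_of_set S) (\<lambda>ob. emp_pmf X (popset pop D (pop ob)))) h
     = (\<Sum>a\<in>S. measure_pmf.expectation (emp_pmf X (popset pop D (pop a))) h /\<^sub>R real (card S))"
    using assms by (intro pmf_expectation_bind_pmf_of_set) (auto simp: set_emp_pmf)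
  then show ?thesis unfolding oracle_mix_eq[OF assms(1,2)]
    by (simp add: sum_divide_distrib divide_inverse_commute sum_distrib_left)
qed

lemma int_emp_sum:
  fixes f :: "'b \<Rightarrow> 'a \<Rightarrow> real"
  assumes "finite S" "S \<noteq> {}" "finite T"
  shows "(\<integral>x. (\<Sum>ob\<in>T. f ob x) / c \<partial>measure_pmf (emp_pmf X S)) = (\<Sum>ob\<in>T. \<integral>x. f ob x \<partial>measure_pmf (emp_pmf X S)) / c"
proof -
  have fin: "finite (set_pmf (emp_pmf X S))" using assms by (simp add: set_emp_pmf)
  have "(\<integral>x. (\<Sum>ob\<in>T. f ob x) \<partial>measure_pmf (emp_pmf X S)) = (\<Sum>ob\<in>T. \<integral>x. f ob x \<partial>measure_pmf (emp_pmf X S))"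
    by (rule Bochner_Integration.integral_sum, rule integrable_measure_pmf_finite, rule fin)
  moreover have "(\<integral>x. (\<Sum>ob\<in>T. f ob x) / c \<partial>measure_pmf (emp_pmf X S)) = (\<integral>x. (\<Sum>ob\<in>T. f ob x) \<partial>measure_pmf (emp_pmf X S)) / c"
    by (rule integral_divide_zero)
  ultimately show ?thesis by simp
qed


lemma k_meas1:
  fixes k :: "'a::topological_space \<Rightarrow> 'a \<Rightarrow> real"
  assumes "(\<lambda>(x,y). k x y) \<in> borel_measurable borel"
  shows "(\<lambda>y. k x y) \<in> borel_measurable borel" "(\<lambda>y. k y x) \<in> borel_measurable borel"
proof -
  have c1: "(\<lambda>y. (x, y)) \<in> borel_measurable borel"
    by (rule borel_measurable_continuous_onI) (intro continuous_intros)
  have c2: "(\<lambda>y. (y, x)) \<in> borel_measurable borel"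
    by (rule borel_measurable_continuous_onI) (intro continuous_intros)
  show "(\<lambda>y. k x y) \<in> borel_measurable borel"
    using measurable_compose[OF c1 assms] by simp
  show "(\<lambda>y. k y x) \<in> borel_measurable borel"
    using measurable_compose[OF c2 assms] by simp
qed

lemma int_finite_pmf:
  fixes f :: "'a \<Rightarrow> real"
  assumes "finite (set_pmf r)"
  shows "(\<integral>y. f y \<partial>measure_pmf r) = (\<Sum>y\<in>set_pmf r. f y * pmf r y)"
  using assms by (intro integral_measure_pmf_real) auto

lemma char_pmf_eq:
  fixes k :: "'a::metric_space \<Rightarrow> 'a \<Rightarrow> real"
  assumes char: "characteristic_kernel k" and fp: "finite (set_pmf p)" and fq: "finite (set_pmf q)"
    and m: "mmd2 k (measure_pmf p) (measure_pmf q) = 0"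
  shows "p = q"
proof -
  have kmeas: "(\<lambda>(x,y). k x y) \<in> borel_measurable borel"
    using char unfolding characteristic_kernel_def by blast
  note k1 = k_meas1[OF kmeas]
  define P' where "P' r = distr (measure_pmf r) borel id" for r :: "'a pmf"
  have sets: "sets (P' r) = sets borel" for r unfolding P'_def by simp
  have prob: "prob_space (P' r)" for r unfolding P'_def
    by (rule measure_pmf.prob_space_distr) simp
  have intP: "integral\<^sup>L (P' r) f = integral\<^sup>L (measure_pmf r) f" if "f \<in> borel_measurable borel" for r and f :: "'a \<Rightarrow> real"
    unfolding P'_def using integral_distr[of id "measure_pmf r" borel f] that by simp
  have inner_meas: "(\<lambda>x. \<integral>y. k x y \<partial>measure_pmf r) \<in> borel_measurable borel" if "finite (set_pmf r)" for r
  proof -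
    have "(\<lambda>x. \<integral>y. k x y \<partial>measure_pmf r) = (\<lambda>x. \<Sum>y\<in>set_pmf r. k x y * pmf r y)"
      using int_finite_pmf[OF that] by simp
    moreover have "(\<lambda>x. \<Sum>y\<in>set_pmf r. k x y * pmf r y) \<in> borel_measurable borel"
      using k1(2) by (intro borel_measurable_sum borel_measurable_times) auto
    ultimately show ?thesis by simp
  qed
  have tr: "(\<integral>x. (\<integral>y. k x y \<partial>P' b) \<partial>P' a) = (\<integral>x. (\<integral>y. k x y \<partial>measure_pmf b) \<partial>measure_pmf a)"
    if "finite (set_pmf b)" for a b
  proof -
    have "(\<lambda>x. \<integral>y. k x y \<partial>P' b) = (\<lambda>x. \<integral>y. k x y \<partial>measure_pmf b)"
      using intP k1(1) by auto
    then show ?thesis using intP[OF inner_meas[OF that]] by simp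
  qed
  have "mmd2 k (P' p) (P' q) = mmd2 k (measure_pmf p) (measure_pmf q)"
    unfolding mmd2_def tr[OF fp] tr[OF fq] ..
  then have m': "mmd2 k (P' p) (P' q) = 0" using m by simp
  have H: "\<And>P Q. prob_space P \<Longrightarrow> prob_space Q \<Longrightarrow> sets P = sets borel \<Longrightarrow> sets Q = sets borel
        \<Longrightarrow> mmd2 k P Q = 0 \<Longrightarrow> P = Q"
    using char unfolding characteristic_kernel_def by blast
  have eq: "P' p = P' q" by (rule H[OF prob prob sets sets m'])
  have ms: "measure (P' r) {x} = pmf r x" for r x
    unfolding P'_def by (subst measure_distr) (auto simp: measure_pmf_single)
  show ?thesis
  proof (rule pmf_eqI)
    fix x show "pmf p x = pmf q x" using ms[of p x] ms[of q x] eq by simp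
  qed
qed

locale setting =
  fixes D :: "'o set" and pop :: "'o \<Rightarrow> nat" and X :: "'o \<Rightarrow> 'a::topological_space"
  assumes finD: "finite D" and pops: "\<forall>ob\<in>D. pop ob \<in> {1,2,3}"
    and nonempty: "\<And>i. i \<in> {1,2,3} \<Longrightarrow> popset pop D i \<noteq> {}"
begin

abbreviation "Dp i \<equiv> popset pop D i"
abbreviation "mix S \<equiv> measure_pmf (oracle_mix pop X D S)"
abbreviation "emp i \<equiv> measure_pmf (emp_pmf X (Dp i))"

lemma Dp_sub: "Dp i \<subseteq> D" unfolding popset_def by auto
lemma Dp_fin: "finite (Dp i)" using Dp_sub finD by (rule finite_subset)
lemma pop_ok: "ob \<in> S \<Longrightarrow> S \<subseteq> D \<Longrightarrow> finite (Dp (pop ob)) \<and> Dp (pop ob) \<noteq> {}"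
  using Dp_fin nonempty pops by blast

definition KK :: "('a \<Rightarrow> 'a \<Rightarrow> real) \<Rightarrow> nat \<Rightarrow> nat \<Rightarrow> real" where
  "KK k i j = (\<integral>x. (\<integral>y. k x y \<partial>emp j) \<partial>emp i)"

lemma I_formula:
  fixes k :: "'a \<Rightarrow> 'a \<Rightarrow> real"
  assumes S: "S \<subseteq> D" "S \<noteq> {}" and T: "T \<subseteq> D" "T \<noteq> {}"
  shows "(\<integral>x. (\<integral>y. k x y \<partial>mix T) \<partial>mix S) = (\<Sum>ob\<in>S. \<Sum>ob'\<in>T. KK k (pop ob) (pop ob')) / (real (card S) * real (card T))"
proof -
  have fS: "finite S" and fT: "finite T" using S T finD finite_subset by auto
  have inner: "(\<integral>y. k x y \<partial>mix T) = (\<Sum>ob'\<in>T. \<integral>y. k x y \<partial>emp (pop ob')) / real (card T)" for x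
    by (rule int_mix[OF fT T(2)]) (use pop_ok T in auto)
  have "(\<integral>x. (\<integral>y. k x y \<partial>mix T) \<partial>mix S) = (\<integral>x. (\<Sum>ob'\<in>T. \<integral>y. k x y \<partial>emp (pop ob')) / real (card T) \<partial>mix S)"
    unfolding inner ..
  also have "\<dots> = (\<Sum>ob\<in>S. \<integral>x. (\<Sum>ob'\<in>T. \<integral>y. k x y \<partial>emp (pop ob')) / real (card T) \<partial>emp (pop ob)) / real (card S)"
    by (rule int_mix[OF fS S(2)]) (use pop_ok S in auto)
  also have "\<dots> = (\<Sum>ob\<in>S. (\<Sum>ob'\<in>T. KK k (pop ob) (pop ob')) / real (card T)) / real (card S)"
    unfolding KK_def by (intro arg_cong2[where f="(/)"] sum.cong refl int_emp_sum fT) (use pop_ok S in auto)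
  also have "\<dots> = (\<Sum>ob\<in>S. \<Sum>ob'\<in>T. KK k (pop ob) (pop ob')) / (real (card S) * real (card T))"
    by (simp add: sum_divide_distrib mult.commute)
  finally show ?thesis .
qed

definition cnt :: "'o set \<Rightarrow> nat \<Rightarrow> nat" where
  "cnt S i = card {ob\<in>S. pop ob = i}"

lemma group3:
  fixes f :: "nat \<Rightarrow> real"
  assumes "S \<subseteq> D"
  shows "(\<Sum>ob\<in>S. f (pop ob)) = (\<Sum>i\<in>{1,2,3}. real (cnt S i) * f i)"
proof -
  have fS: "finite S" using assms finD finite_subset by auto
  have "(\<Sum>ob\<in>S. f (pop ob)) = (\<Sum>i\<in>{1,2,3}. \<Sum>ob\<in>{x\<in>S. pop x = i}. f (pop ob))"
    by (rule sum.group[symmetric]) (use fS assms pops in auto)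
  also have "\<dots> = (\<Sum>i\<in>{1,2,3}. real (cnt S i) * f i)"
    unfolding cnt_def by (intro sum.cong refl) auto
  finally show ?thesis .
qed

lemma KK_sum:
  fixes k :: "'a \<Rightarrow> 'a \<Rightarrow> real"
  assumes "i \<in> {1,2,3}" "j \<in> {1,2,3}"
  shows "KK k i j = (\<Sum>p\<in>Dp i. \<Sum>q\<in>Dp j. k (X p) (X q)) / (real (card (Dp i)) * real (card (Dp j)))"
proof -
  have ne: "Dp i \<noteq> {}" "Dp j \<noteq> {}" using assms nonempty by auto
  have "KK k i j = (\<integral>x. (\<Sum>q\<in>Dp j. k x (X q)) / real (card (Dp j)) \<partial>emp i)"
    unfolding KK_def by (simp only: int_emp[OF Dp_fin ne(2)])
  also have "\<dots> = (\<Sum>p\<in>Dp i. (\<Sum>q\<in>Dp j. k (X p) (X q)) / real (card (Dp j))) / real (card (Dp i))"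
    by (rule int_emp[OF Dp_fin ne(1)])
  also have "\<dots> = (\<Sum>p\<in>Dp i. \<Sum>q\<in>Dp j. k (X p) (X q)) / (real (card (Dp i)) * real (card (Dp j)))"
    by (simp add: sum_divide_distrib[symmetric] divide_divide_eq_left mult.commute)
  finally show ?thesis .
qed

lemma KK_sym:
  fixes k :: "'a \<Rightarrow> 'a \<Rightarrow> real"
  assumes "\<forall>x y. k x y = k y x" "i \<in> {1,2,3}" "j \<in> {1,2,3}"
  shows "KK k i j = KK k j i"
  unfolding KK_sum[OF assms(2,3)] KK_sum[OF assms(3,2)] using assms(1)
  by (subst sum.swap) (simp add: mult.commute)

lemma KK_psd:
  fixes k :: "'a \<Rightarrow> 'a \<Rightarrow> real" and u :: "nat \<Rightarrow> real"
  assumes pd: "pd_kernel k"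
  shows "0 \<le> (\<Sum>i\<in>{1,2,3}. \<Sum>j\<in>{1,2,3}. u i * u j * KK k i j)"
proof -
  define w where "w i = u i / real (card (Dp i))" for i
  define c where "c p = w (pop p)" for p
  obtain L where L: "set L = D" "distinct L" using finite_distinct_list[OF finD] by blast
  have bij: "bij_betw ((!) L) {..<length L} D" using bij_betw_nth[OF L(2) refl] L(1) by simp
  from pd have H: "\<And>xs cc. 0 \<le> (\<Sum>i<length xs. \<Sum>j<length xs. cc i * cc j * k (xs!i) (xs!j))"
    unfolding pd_kernel_def by blast
  have "0 \<le> (\<Sum>i<length (map X L). \<Sum>j<length (map X L). c (L!i) * c (L!j) * k (map X L ! i) (map X L ! j))"
    by (rule H)
  also have "\<dots> = (\<Sum>i<length L. \<Sum>j<length L. c (L!i) * c (L!j) * k (X (L!i)) (X (L!j)))"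
    by (intro sum.cong refl) auto
  also have "\<dots> = (\<Sum>p\<in>D. \<Sum>q\<in>D. c p * c q * k (X p) (X q))"
    using sum.reindex_bij_betw[OF bij, of "\<lambda>p. \<Sum>j<length L. c p * c (L!j) * k (X p) (X (L!j))"]
          sum.reindex_bij_betw[OF bij, of "\<lambda>q. c _ * c q * k (X _) (X q)"]
    by simp
  also have "\<dots> = (\<Sum>i\<in>{1,2,3}. \<Sum>p\<in>Dp i. \<Sum>j\<in>{1,2,3}. \<Sum>q\<in>Dp j. c p * c q * k (X p) (X q))"
  proof -
    have g: "(\<Sum>p\<in>D. h p) = (\<Sum>i\<in>{1,2,3}. \<Sum>p\<in>Dp i. h p)" for h :: "'o \<Rightarrow> real"
      unfolding popset_def by (rule sum.group[symmetric]) (use finD pops in auto)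
    show ?thesis unfolding g ..
  qed
  also have "\<dots> = (\<Sum>i\<in>{1,2,3}. \<Sum>j\<in>{1,2,3}. \<Sum>p\<in>Dp i. \<Sum>q\<in>Dp j. w i * w j * k (X p) (X q))"
  proof (intro sum.cong refl)
    fix i :: nat
    have "(\<Sum>p\<in>Dp i. \<Sum>j\<in>{1,2,3}. \<Sum>q\<in>Dp j. c p * c q * k (X p) (X q))
        = (\<Sum>j\<in>{1,2,3}. \<Sum>p\<in>Dp i. \<Sum>q\<in>Dp j. c p * c q * k (X p) (X q))"
      by (rule sum.swap)
    also have "\<dots> = (\<Sum>j\<in>{1,2,3}. \<Sum>p\<in>Dp i. \<Sum>q\<in>Dp j. w i * w j * k (X p) (X q))"
      unfolding c_def popset_def by (intro sum.cong refl) auto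
    finally show "(\<Sum>p\<in>Dp i. \<Sum>j\<in>{1,2,3}. \<Sum>q\<in>Dp j. c p * c q * k (X p) (X q))
        = (\<Sum>j\<in>{1,2,3}. \<Sum>p\<in>Dp i. \<Sum>q\<in>Dp j. w i * w j * k (X p) (X q))" .
  qed
  also have "\<dots> = (\<Sum>i\<in>{1,2,3}. \<Sum>j\<in>{1,2,3}. u i * u j * KK k i j)"
  proof (intro sum.cong refl)
    fix i j :: nat assume ij: "i \<in> {1,2,3}" "j \<in> {1,2,3}"
    have ci: "real (card (Dp i)) \<noteq> 0" "real (card (Dp j)) \<noteq> 0"
      using ij nonempty Dp_fin by auto
    show "(\<Sum>p\<in>Dp i. \<Sum>q\<in>Dp j. w i * w j * k (X p) (X q)) = u i * u j * KK k i j"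
    proof -
      have "(\<Sum>p\<in>Dp i. \<Sum>q\<in>Dp j. w i * w j * k (X p) (X q)) = (w i * w j) * (\<Sum>p\<in>Dp i. \<Sum>q\<in>Dp j. k (X p) (X q))"
        by (simp add: sum_distrib_left mult.assoc)
      then show ?thesis unfolding KK_sum[OF ij] w_def by simp
    qed
  qed
  finally show ?thesis .
qed

end



locale main_ctx = setting D pop X
  for D :: "'o set" and pop :: "'o \<Rightarrow> nat" and X :: "'o \<Rightarrow> 'a::metric_space" +
  fixes k :: "'a \<Rightarrow> 'a \<Rightarrow> real"
  assumes char: "characteristic_kernel k"
    and dist12: "emp_pmf X (popset pop D 1) \<noteq> emp_pmf X (popset pop D 2)"
    and dist13: "emp_pmf X (popset pop D 1) \<noteq> emp_pmf X (popset pop D 3)"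
    and dist23: "emp_pmf X (popset pop D 2) \<noteq> emp_pmf X (popset pop D 3)"
begin

lemma ksym: "\<forall>x y. k x y = k y x" using char unfolding characteristic_kernel_def pd_kernel_def by blast
lemma kpd: "pd_kernel k" using char unfolding characteristic_kernel_def by blast

lemma Ks: "KK k 2 1 = KK k 1 2" "KK k 3 1 = KK k 1 3" "KK k 3 2 = KK k 2 3"
  using KK_sym[OF ksym] by auto

lemma Ks': "KK k 2 (Suc 0) = KK k (Suc 0) 2" "KK k 3 (Suc 0) = KK k (Suc 0) 3"
  using Ks by simp_all

lemma mmd_emp: "i \<in> {1,2,3} \<Longrightarrow> j \<in> {1,2,3} \<Longrightarrow> mmd2 k (emp i) (emp j) = KK k i i + KK k j j - 2 * KK k i j"
  unfolding mmd2_def KK_def ..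

lemma psd3: "0 \<le> u1 * u1 * KK k 1 1 + u2 * u2 * KK k 2 2 + u3 * u3 * KK k 3 3 + 2 * u1 * u2 * KK k 1 2 + 2 * u1 * u3 * KK k 1 3 + 2 * u2 * u3 * KK k 2 3"
proof -
  define u where "u i = (if i = 1 then u1 else if i = 2 then u2 else u3)" for i :: nat
  have "0 \<le> (\<Sum>i\<in>{1,2,3}. \<Sum>j\<in>{1,2,3}. u i * u j * KK k i j)" by (rule KK_psd[OF kpd])
  also have "\<dots> = u1 * u1 * KK k 1 1 + u2 * u2 * KK k 2 2 + u3 * u3 * KK k 3 3 + 2 * u1 * u2 * KK k 1 2 + 2 * u1 * u3 * KK k 1 3 + 2 * u2 * u3 * KK k 2 3"
    unfolding u_def by (simp add: Ks Ks' algebra_simps)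
  finally show ?thesis .
qed

lemma dpos_gen:
  assumes ij: "i \<in> {1,2,3}" "j \<in> {1,2,3}" and ne: "emp_pmf X (Dp i) \<noteq> emp_pmf X (Dp j)"
  shows "mmd2 k (emp i) (emp j) > 0"
proof -
  have fin: "finite (set_pmf (emp_pmf X (Dp l)))" if "l \<in> {1,2,3}" for l
    using that Dp_fin nonempty by (simp add: set_emp_pmf)
  have "mmd2 k (emp i) (emp j) \<noteq> 0"
    using char_pmf_eq[OF char fin[OF ij(1)] fin[OF ij(2)]] ne by blast
  moreover have "mmd2 k (emp i) (emp j) \<ge> 0"
  proof -
    define u where "u l = (if l = i then 1 else if l = j then -1 else 0::real)" for l :: nat
    have ij': "i \<noteq> j" using ne by auto
    have "0 \<le> (\<Sum>a\<in>{1,2,3}. \<Sum>b\<in>{1,2,3}. u a * u b * KK k a b)" by (rule KK_psd[OF kpd])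
    also have "\<dots> = KK k i i + KK k j j - 2 * KK k i j"
      using ij ij' KK_sym[OF ksym] unfolding u_def by (auto simp: algebra_simps)
    finally show ?thesis using mmd_emp[OF ij] by simp
  qed
  ultimately show ?thesis by linarith
qed

lemma card_Dp_pos: "i \<in> {1,2,3} \<Longrightarrow> card (Dp i) \<ge> 1"
  using nonempty Dp_fin by (simp add: Suc_le_eq card_gt_0_iff)

lemma gram_ok: "gram (real (card (Dp 1))) (real (card (Dp 2))) (real (card (Dp 3)))
   (KK k 1 1) (KK k 1 2) (KK k 1 3) (KK k 2 2) (KK k 2 3) (KK k 3 3)"
proof
  show "1 \<le> real (card (Dp 1))" "1 \<le> real (card (Dp 2))" "1 \<le> real (card (Dp 3))"
    using card_Dp_pos by auto
  show "0 \<le> u1 * u1 * KK k 1 1 + u2 * u2 * KK k 2 2 + u3 * u3 * KK k 3 3 + 2 * u1 * u2 * KK k 1 2 + 2 * u1 * u3 * KK k 1 3 + 2 * u2 * u3 * KK k 2 3" for u1 u2 u3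
    by (rule psd3)
  show "KK k 1 1 + KK k 2 2 - 2 * KK k 1 2 > 0" using dpos_gen[of 1 2] dist12 mmd_emp[of 1 2] by simp
  show "KK k 1 1 + KK k 3 3 - 2 * KK k 1 3 > 0" using dpos_gen[of 1 3] dist13 mmd_emp[of 1 3] by simp
  show "KK k 2 2 + KK k 3 3 - 2 * KK k 2 3 > 0" using dpos_gen[of 2 3] dist23 mmd_emp[of 2 3] by simp
qed

sublocale G: gram "real (card (Dp 1))" "real (card (Dp 2))" "real (card (Dp 3))"
   "KK k 1 1" "KK k 1 2" "KK k 1 3" "KK k 2 2" "KK k 2 3" "KK k 3 3"
  by (rule gram_ok)

lemma d_eq: "mmd2 k (emp 1) (emp 2) = G.d12" "mmd2 k (emp 1) (emp 3) = G.d13" "mmd2 k (emp 2) (emp 3) = G.d23"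
  unfolding G.d12_def G.d13_def G.d23_def using mmd_emp[of 1 2] mmd_emp[of 1 3] mmd_emp[of 2 3] by simp_all

lemma cnt_sum: "C \<subseteq> D \<Longrightarrow> cnt C 1 + cnt C 2 + cnt C 3 = card C"
proof -
  assume C: "C \<subseteq> D"
  have "(\<Sum>ob\<in>C. (\<lambda>_. 1::real) (pop ob)) = (\<Sum>i\<in>{1,2,3}. real (cnt C i) * 1)" by (rule group3[OF C])
  then have "real (card C) = real (cnt C 1 + cnt C 2 + cnt C 3)" by simp
  then show ?thesis by linarith
qed

lemma cnt_Dp: "cnt C i = card (C \<inter> Dp i)" if "C \<subseteq> D"
  unfolding cnt_def popset_def using that by (intro arg_cong[where f=card]) auto

lemma cnt_compl: "C \<subseteq> D \<Longrightarrow> cnt (D - C) i = card (Dp i) - cnt C i"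
proof -
  assume C: "C \<subseteq> D"
  have "(D - C) \<inter> Dp i = Dp i - (C \<inter> Dp i)" using Dp_sub by auto
  then have "card ((D - C) \<inter> Dp i) = card (Dp i) - card (C \<inter> Dp i)"
    using Dp_fin by (simp add: card_Diff_subset)
  then show ?thesis using cnt_Dp[OF C] cnt_Dp[of "D - C"] by simp
qed

lemma cnt_le: "C \<subseteq> D \<Longrightarrow> cnt C i \<le> card (Dp i)"
  using cnt_Dp Dp_fin by (simp add: card_mono)

lemma card_D: "card D = card (Dp 1) + card (Dp 2) + card (Dp 3)"
  using cnt_sum[of D] cnt_Dp[of D] Dp_sub by (simp add: Int_absorb1)

lemma nn_eq: "G.nn = real (card D)" unfolding G.nn_def card_D by simp

lemma I_cnt:
  assumes S: "S \<subseteq> D" "S \<noteq> {}" and T: "T \<subseteq> D" "T \<noteq> {}"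
  shows "(\<integral>x. (\<integral>y. k x y \<partial>mix T) \<partial>mix S) =
    G.BK (cnt S 1) (cnt S 2) (cnt S 3) (cnt T 1) (cnt T 2) (cnt T 3) / (real (card S) * real (card T))"
proof -
  have "(\<Sum>ob\<in>S. \<Sum>ob'\<in>T. KK k (pop ob) (pop ob')) = (\<Sum>ob\<in>S. \<Sum>j\<in>{1,2,3}. real (cnt T j) * KK k (pop ob) j)"
    by (intro sum.cong refl group3[OF T(1)])
  also have "\<dots> = (\<Sum>i\<in>{1,2,3}. real (cnt S i) * (\<Sum>j\<in>{1,2,3}. real (cnt T j) * KK k i j))"
    by (rule group3[OF S(1), where f="\<lambda>i. \<Sum>j\<in>{1,2,3}. real (cnt T j) * KK k i j"])
  also have "\<dots> = G.BK (cnt S 1) (cnt S 2) (cnt S 3) (cnt T 1) (cnt T 2) (cnt T 3)"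
    unfolding G.BK_def by (simp add: Ks Ks' algebra_simps)
  finally show ?thesis using I_formula[OF S T] by simp
qed

lemma val_formula:
  assumes C: "C \<subseteq> D" "C \<noteq> {}" "C \<noteq> D"
  shows "dw_star k pop X D C (D - C) = G.F (cnt C 1) (cnt C 2) (cnt C 3)"
proof -
  define T where "T = D - C"
  have T: "T \<subseteq> D" "T \<noteq> {}" using C unfolding T_def by auto
  have fC: "finite C" using C finD finite_subset by auto
  have cardT: "card T = card D - card C" unfolding T_def using C fC by (simp add: card_Diff_subset)
  have cCD: "card C < card D" using C finD by (simp add: psubset_card_mono psubsetI)
  have cC0: "card C > 0" using C fC by (simp add: card_gt_0_iff)
  define s where "s = real (card C)"
  have s: "s = real (cnt C 1) + real (cnt C 2) + real (cnt C 3)" using cnt_sum[OF C(1)] unfolding s_def by simp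
  have t: "real (card T) = G.nn - s" using cardT cCD nn_eq unfolding s_def by simp
  have b: "real (cnt T i) = real (card (Dp i)) - real (cnt C i)" for i
    using cnt_compl[OF C(1)] cnt_le[OF C(1)] unfolding T_def by (simp add: of_nat_diff)
  have sum_ct: "card C + card T = card D" using cardT cCD by simp
  have dw1: "dw_star k pop X D C (D - C) = s * (G.nn - s) / G.nn * mmd2 k (mix C) (mix T)"
    unfolding dw_star_def T_def[symmetric] using sum_ct t nn_eq unfolding s_def by simp
  have I1: "(\<integral>x. (\<integral>y. k x y \<partial>mix C) \<partial>mix C) = G.BK (cnt C 1) (cnt C 2) (cnt C 3) (cnt C 1) (cnt C 2) (cnt C 3) / s^2"
    using I_cnt[OF C(1,2) C(1,2)] unfolding s_def by (simp add: power2_eq_square)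
  have I2: "(\<integral>x. (\<integral>y. k x y \<partial>mix T) \<partial>mix T) = G.BK (cnt T 1) (cnt T 2) (cnt T 3) (cnt T 1) (cnt T 2) (cnt T 3) / (G.nn - s)^2"
    using I_cnt[OF T T] t by (simp add: power2_eq_square)
  have I3: "(\<integral>x. (\<integral>y. k x y \<partial>mix T) \<partial>mix C) = G.BK (cnt C 1) (cnt C 2) (cnt C 3) (cnt T 1) (cnt T 2) (cnt T 3) / (s * (G.nn - s))"
    using I_cnt[OF C(1,2) T] t unfolding s_def by simp
  have M: "mmd2 k (mix C) (mix T) =
      G.BK (cnt C 1) (cnt C 2) (cnt C 3) (cnt C 1) (cnt C 2) (cnt C 3) / s^2
    + G.BK (cnt T 1) (cnt T 2) (cnt T 3) (cnt T 1) (cnt T 2) (cnt T 3) / (G.nn - s)^2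
    - 2 * (G.BK (cnt C 1) (cnt C 2) (cnt C 3) (cnt T 1) (cnt T 2) (cnt T 3) / (s * (G.nn - s)))"
    unfolding mmd2_def I1 I2 I3 ..
  have e: "s * (G.nn - s) / G.nn * (G.BK (cnt C 1) (cnt C 2) (cnt C 3) (cnt C 1) (cnt C 2) (cnt C 3) / s^2
    + G.BK (real (card (Dp 1)) - cnt C 1) (real (card (Dp 2)) - cnt C 2) (real (card (Dp 3)) - cnt C 3)
           (real (card (Dp 1)) - cnt C 1) (real (card (Dp 2)) - cnt C 2) (real (card (Dp 3)) - cnt C 3) / (G.nn - s)^2
    - 2 * G.BK (cnt C 1) (cnt C 2) (cnt C 3) (real (card (Dp 1)) - cnt C 1) (real (card (Dp 2)) - cnt C 2) (real (card (Dp 3)) - cnt C 3) / (s * (G.nn - s)))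
    = G.F (cnt C 1) (cnt C 2) (cnt C 3)"
    by (rule G.dw_formula[OF s]) (use cC0 cCD nn_eq s_def in auto)
  show ?thesis unfolding dw1 M b using e by (simp only: times_divide_eq_right)
qed


abbreviation "dwk \<equiv> dw_star k pop X D"

lemma C1_of_0: "C1_of c 0 = {}" unfolding C1_of_def by simp
lemma C1_of_Suc: "C1_of c (Suc r) = insert (c (Suc r)) (C1_of c r)"
  unfolding C1_of_def by (simp add: atLeastAtMostSuc_conv)
lemma C1_of_mono: "r \<le> r' \<Longrightarrow> C1_of c r \<subseteq> C1_of c r'"
  unfolding C1_of_def by auto
lemma C1_of_mem: "1 \<le> r \<Longrightarrow> c r \<in> C1_of c r"
  unfolding C1_of_def by auto

lemma run_max:
  assumes "BS_star_run D dwk c" "Suc r \<le> card D - 1"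
  shows "maximizes_at D dwk (C1_of c r) (c (Suc r))"
  using assms unfolding BS_star_run_def by (metis atLeastAtMost_iff diff_Suc_1 le_add1 plus_1_eq_Suc)

lemma run_struct:
  assumes "BS_star_run D dwk c" "r \<le> card D - 1"
  shows "C1_of c r \<subseteq> D \<and> card (C1_of c r) = r"
  using assms(2)
proof (induction r)
  case 0 then show ?case by (simp add: C1_of_0)
next
  case (Suc r)
  then have IH: "C1_of c r \<subseteq> D" "card (C1_of c r) = r" by auto
  have "c (Suc r) \<in> D - C1_of c r"
    using run_max[OF assms(1) Suc.prems] unfolding maximizes_at_def by blast
  moreover have "finite (C1_of c r)" using IH finD finite_subset by auto
  ultimately show ?case using IH by (simp add: C1_of_Suc)
qed

lemma maximizes_iff:
  "maximizes_at D dwk C x \<longleftrightarrow> x \<in> D - C \<and> (\<forall>y\<in>D - C. dwk (insert y C) (D - insert y C) \<le> dwk (insert x C) (D - insert x C))"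
  unfolding maximizes_at_def ..

lemma cnt_insert:
  assumes "y \<notin> C" "finite C"
  shows "cnt (insert y C) i = cnt C i + (if pop y = i then 1 else 0)"
proof -
  have "{ob \<in> insert y C. pop ob = i} = (if pop y = i then insert y {ob\<in>C. pop ob = i} else {ob\<in>C. pop ob = i})"
    by auto
  then show ?thesis unfolding cnt_def using assms by auto
qed

lemma three_ge: "card D \<ge> card (Dp 1) + card (Dp 2) + 1" "card D \<ge> card (Dp 1) + 2"
  using card_D card_Dp_pos[of 3] card_Dp_pos[of 2] by auto

lemma val_ins:
  assumes C: "C \<subseteq> D" "y \<in> D - C" "card C + 1 < card D"
  shows "dwk (insert y C) (D - insert y C) =
    G.F (real (cnt C 1) + (if pop y = 1 then 1 else 0)) (real (cnt C 2) + (if pop y = 2 then 1 else 0)) (real (cnt C 3) + (if pop y = 3 then 1 else 0))"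
proof -
  have fC: "finite C" using C finD finite_subset by auto
  have "insert y C \<noteq> D" using C fC by (metis card_insert_disjoint DiffE less_irrefl Suc_eq_plus1)
  then have "dwk (insert y C) (D - insert y C) = G.F (cnt (insert y C) 1) (cnt (insert y C) 2) (cnt (insert y C) 3)"
    using C by (intro val_formula) auto
  then show ?thesis using cnt_insert[of y C] C fC by simp
qed

lemma pop_cases: "y \<in> D \<Longrightarrow> pop y = 1 \<or> pop y = 2 \<or> pop y = 3" using pops by auto

lemma Dp_mem: "y \<in> Dp i \<longleftrightarrow> y \<in> D \<and> pop y = i" unfolding popset_def by auto

lemma cnt_zero: "C \<subseteq> D \<Longrightarrow> (\<And>y. y \<in> C \<Longrightarrow> pop y \<noteq> i) \<Longrightarrow> cnt C i = 0"
proof -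
  assume "\<And>y. y \<in> C \<Longrightarrow> pop y \<noteq> i"
  then have "{ob\<in>C. pop ob = i} = {}" by auto
  then show ?thesis unfolding cnt_def by (metis card.empty)
qed
lemma cnt_full: "C \<subseteq> D \<Longrightarrow> Dp i \<subseteq> C \<Longrightarrow> cnt C i = card (Dp i)"
  using cnt_Dp[of C i] by (simp add: Int_absorb1)
lemma Dp_disj: "y \<in> Dp i \<Longrightarrow> y \<in> Dp j \<Longrightarrow> i = j" unfolding popset_def by auto

lemma claim_a1:
  assumes x: "x \<in> Dp 1"
  shows "maximizes_at D dwk {} x \<longleftrightarrow> (G.g22 \<le> G.g11 \<and> G.g33 \<le> G.g11)"
proof -
  have vy: "dwk (insert y {}) (D - insert y {}) = G.F (if pop y = 1 then 1 else 0) (if pop y = 2 then 1 else 0) (if pop y = 3 then 1 else 0)"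
    if "y \<in> D" for y
    using val_ins[of "{}" y] that three_ge by (simp add: cnt_def)
  have xD: "x \<in> D" "pop x = 1" using x Dp_mem by auto
  have vx: "dwk (insert x {}) (D - insert x {}) = G.F 1 0 0" using vy[OF xD(1)] xD(2) by simp
  show ?thesis
  proof
    assume m: "maximizes_at D dwk {} x"
    obtain y2 where y2: "y2 \<in> Dp 2" using nonempty[of 2] by auto
    obtain y3 where y3: "y3 \<in> Dp 3" using nonempty[of 3] by auto
    have "dwk (insert y2 {}) (D - insert y2 {}) \<le> dwk (insert x {}) (D - insert x {})"
      using m y2 Dp_sub unfolding maximizes_iff by auto
    then have "G.F 0 1 0 \<le> G.F 1 0 0" using vy[of y2] y2 Dp_mem vx by auto
    moreover have "dwk (insert y3 {}) (D - insert y3 {}) \<le> dwk (insert x {}) (D - insert x {})"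
      using m y3 Dp_sub unfolding maximizes_iff by auto
    then have "G.F 0 0 1 \<le> G.F 1 0 0" using vy[of y3] y3 Dp_mem vx by auto
    ultimately show "G.g22 \<le> G.g11 \<and> G.g33 \<le> G.g11" using G.F_first by auto
  next
    assume g: "G.g22 \<le> G.g11 \<and> G.g33 \<le> G.g11"
    show "maximizes_at D dwk {} x"
      unfolding maximizes_iff
    proof (intro conjI ballI)
      show "x \<in> D - {}" using xD by simp
      fix y assume "y \<in> D - {}"
      then have yD: "y \<in> D" by simp
      show "dwk (insert y {}) (D - insert y {}) \<le> dwk (insert x {}) (D - insert x {})"
        using pop_cases[OF yD] vy[OF yD] vx G.F_first g by auto
    qed
  qed
qed

lemma claim_a2:
  assumes run: "BS_star_run D dwk c" and g: "G.g22 \<le> G.g11" "G.g33 \<le> G.g11" and c1: "c 1 \<in> Dp 1"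
  shows "r \<in> {1..card (Dp 1)} \<Longrightarrow> C1_of c r \<subseteq> Dp 1"
proof (induction r)
  case 0 then show ?case by simp
next
  case (Suc r)
  show ?case
  proof (cases "r = 0")
    case True then show ?thesis using c1 by (simp add: C1_of_Suc C1_of_0)
  next
    case False
  then have r: "1 \<le> r" "Suc r \<le> card (Dp 1)" using Suc.prems by auto
  have IH: "C1_of c r \<subseteq> Dp 1" using Suc.IH r by auto
  have rD: "Suc r \<le> card D - 1" using r three_ge by linarith
  have st: "C1_of c r \<subseteq> D" "card (C1_of c r) = r" using run_struct[OF run, of r] rD by auto
  have m: "maximizes_at D dwk (C1_of c r) (c (Suc r))" by (rule run_max[OF run rD])
  have p1: "\<And>y. y \<in> C1_of c r \<Longrightarrow> pop y = 1" using IH by (auto simp: popset_def)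
  have cnts: "cnt (C1_of c r) 1 = r" "cnt (C1_of c r) 2 = 0" "cnt (C1_of c r) 3 = 0"
    using cnt_Dp[OF st(1), of 1] IH st(2) apply (simp add: Int_absorb2)
    by (rule cnt_zero[OF st(1)], use p1 in force)+
  have "c (Suc r) \<in> Dp 1"
  proof (rule ccontr)
    assume nc: "c (Suc r) \<notin> Dp 1"
    define C where "C = C1_of c r"
    define z where "z = c (Suc r)"
    have cD: "z \<in> D - C" using m unfolding maximizes_iff C_def z_def by blast
    have finC: "finite C" using st(1) finD finite_subset unfolding C_def by blast
    have ltc: "card C < card (Dp 1)" using st r unfolding C_def by simp
    have "\<not> Dp 1 \<subseteq> C"
    proof
      assume "Dp 1 \<subseteq> C"
      then have "card (Dp 1) \<le> card C" by (rule card_mono[OF finC])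
      then show False using ltc by simp
    qed
    then obtain y where y: "y \<in> Dp 1" "y \<notin> C" by blast
    have py: "pop y = 1" using y(1) unfolding popset_def by simp
    have yD: "y \<in> D - C" using y Dp_sub by auto
    have lt: "card C + 1 < card D" using st rD unfolding C_def by linarith
    have cnts': "cnt C 1 = r" "cnt C 2 = 0" "cnt C 3 = 0" using cnts unfolding C_def by auto
    have vy: "dwk (insert y C) (D - insert y C) = G.F (real r + 1) 0 0"
      using val_ins[OF st(1)[folded C_def] yD lt] unfolding cnts' py by simp
    have pz: "pop z = 2 \<or> pop z = 3" using nc cD pop_cases[of z] unfolding z_def popset_def by auto
    have nnr: "real r + 1 < G.nn" using rD nn_eq three_ge by simp
    have le: "dwk (insert y C) (D - insert y C) \<le> dwk (insert z C) (D - insert z C)"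
      using m yD unfolding maximizes_iff C_def z_def by blast
    from pz show False
    proof
      assume p2: "pop z = 2"
      have "dwk (insert z C) (D - insert z C) = G.F (real r) 1 0"
        using val_ins[OF st(1)[folded C_def] cD lt] unfolding cnts' p2 by simp
      moreover have "G.F (real r) 1 0 < G.F (real r + 1) 0 0"
        by (rule G.a_step2) (use r g nnr in auto)
      ultimately show False using le vy by linarith
    next
      assume p3: "pop z = 3"
      have "dwk (insert z C) (D - insert z C) = G.F (real r) 0 1"
        using val_ins[OF st(1)[folded C_def] cD lt] unfolding cnts' p3 by simp
      moreover have "G.F (real r) 0 1 < G.F (real r + 1) 0 0"
        by (rule G.a_step3) (use r g nnr in auto)
      ultimately show False using le vy by linarith
    qed
  qed
  then show ?thesis using IH by (simp add: C1_of_Suc)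
  qed
qed


lemma cnt_sub1: "C \<subseteq> Dp 1 \<Longrightarrow> cnt C 1 = card C \<and> cnt C 2 = 0 \<and> cnt C 3 = 0"
proof -
  assume C: "C \<subseteq> Dp 1"
  then have CD: "C \<subseteq> D" using Dp_sub by blast
  have p: "\<And>y. y \<in> C \<Longrightarrow> pop y = 1" using C unfolding popset_def by auto
  have "cnt C 2 = 0" by (rule cnt_zero[OF CD]) (use p in force)
  moreover have "cnt C 3 = 0" by (rule cnt_zero[OF CD]) (use p in force)
  ultimately show ?thesis using cnt_sum[OF CD] by simp
qed

lemma cnt_sub12: "Dp 1 \<subseteq> C \<Longrightarrow> C \<subseteq> Dp 1 \<union> Dp 2 \<Longrightarrow> cnt C 1 = card (Dp 1) \<and> cnt C 2 = card C - card (Dp 1) \<and> cnt C 3 = 0"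
proof -
  assume C: "Dp 1 \<subseteq> C" "C \<subseteq> Dp 1 \<union> Dp 2"
  then have CD: "C \<subseteq> D" using Dp_sub by blast
  have p: "\<And>y. y \<in> C \<Longrightarrow> pop y \<noteq> 3" using C unfolding popset_def by auto
  have "cnt C 3 = 0" by (rule cnt_zero[OF CD]) (use p in force)
  moreover have "cnt C 1 = card (Dp 1)" by (rule cnt_full[OF CD C(1)])
  ultimately show ?thesis using cnt_sum[OF CD] by simp
qed

lemma cnt_sup12: "Dp 1 \<union> Dp 2 \<subseteq> C \<Longrightarrow> C \<subseteq> D \<Longrightarrow> cnt C 1 = card (Dp 1) \<and> cnt C 2 = card (Dp 2) \<and> cnt C 3 = card C - card (Dp 1) - card (Dp 2)"
proof -
  assume C: "Dp 1 \<union> Dp 2 \<subseteq> C" "C \<subseteq> D"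
  have "cnt C 1 = card (Dp 1)" by (rule cnt_full) (use C in auto)
  moreover have "cnt C 2 = card (Dp 2)" by (rule cnt_full) (use C in auto)
  ultimately show ?thesis using cnt_sum[OF C(2)] by simp
qed

lemma val_C:
  assumes "C \<subseteq> D" "card C \<ge> 1" "card C < card D"
  shows "dwk C (D - C) = G.F (cnt C 1) (cnt C 2) (cnt C 3)"
proof (rule val_formula)
  show "C \<subseteq> D" by fact
  show "C \<noteq> {}" using assms(2) by auto
  show "C \<noteq> D" using assms(3) by auto
qed

context
  fixes c :: "nat \<Rightarrow> 'o"
  assumes run: "BS_star_run D dwk c" and g: "G.g22 \<le> G.g11" "G.g33 \<le> G.g11" and c1: "c 1 \<in> Dp 1"
begin

lemma ph1_val:
  assumes r: "r \<in> {1..card (Dp 1)}"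
  shows "dwk (C1_of c r) (D - C1_of c r) = G.F (real r) 0 0"
proof -
  have rD: "r \<le> card D - 1" using r three_ge by auto
  have st: "C1_of c r \<subseteq> D" "card (C1_of c r) = r" using run_struct[OF run rD] by auto
  have sub: "C1_of c r \<subseteq> Dp 1" by (rule claim_a2[OF run g c1 r])
  show ?thesis using val_C[OF st(1)] st r rD cnt_sub1[OF sub] three_ge by auto
qed

lemma claim_a3:
  assumes r: "r \<in> {1..<card (Dp 1)}"
  shows "dwk (C1_of c r) (D - C1_of c r) < dwk (C1_of c (Suc r)) (D - C1_of c (Suc r))"
proof -
  have "G.F (real r) 0 0 < G.F (real r + 1) 0 0"
    by (rule G.a_mono) (use G.g11_pos[OF g(1)] r three_ge nn_eq in auto)
  then show ?thesis using ph1_val[of r] ph1_val[of "Suc r"] r by (auto simp: add.commute)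
qed

lemma C1_N1: "C1_of c (card (Dp 1)) = Dp 1"
proof -
  have r: "card (Dp 1) \<in> {1..card (Dp 1)}" using card_Dp_pos[of 1] by auto
  have rD: "card (Dp 1) \<le> card D - 1" using three_ge by auto
  have "C1_of c (card (Dp 1)) \<subseteq> Dp 1" by (rule claim_a2[OF run g c1 r])
  moreover have "card (C1_of c (card (Dp 1))) = card (Dp 1)" using run_struct[OF run rD] by auto
  ultimately show ?thesis using Dp_fin by (simp add: card_subset_eq)
qed

lemma claim_b1:
  assumes x: "x \<in> Dp 2"
  shows "maximizes_at D dwk (C1_of c (card (Dp 1))) x \<longleftrightarrow> 0 \<le> G.Delta0"
proof -
  have D1D: "Dp 1 \<subseteq> D" by (rule Dp_sub)
  have cn: "cnt (Dp 1) 1 = card (Dp 1)" "cnt (Dp 1) 2 = 0" "cnt (Dp 1) 3 = 0" using cnt_sub1[of "Dp 1"] by auto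
  have lt: "card (Dp 1) + 1 < card D" using three_ge by auto
  have vy: "dwk (insert y (Dp 1)) (D - insert y (Dp 1)) = G.F (card (Dp 1)) (if pop y = 2 then 1 else 0) (if pop y = 3 then 1 else 0)"
    if "y \<in> D - Dp 1" for y
  proof -
    have "pop y \<noteq> 1" using that unfolding popset_def by auto
    then show ?thesis using val_ins[OF D1D that lt] unfolding cn by simp
  qed
  have xD: "x \<in> D - Dp 1" "pop x = 2" using x Dp_sub unfolding popset_def by auto
  have vx: "dwk (insert x (Dp 1)) (D - insert x (Dp 1)) = G.F (card (Dp 1)) 1 0" using vy[OF xD(1)] xD(2) by simp
  show ?thesis unfolding C1_N1
  proof
    assume m: "maximizes_at D dwk (Dp 1) x"
    obtain y3 where y3: "y3 \<in> Dp 3" using nonempty[of 3] by auto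
    have y3D: "y3 \<in> D - Dp 1" "pop y3 = 3" using y3 Dp_sub unfolding popset_def by auto
    have "dwk (insert y3 (Dp 1)) (D - insert y3 (Dp 1)) \<le> dwk (insert x (Dp 1)) (D - insert x (Dp 1))"
      using m y3D unfolding maximizes_iff by blast
    then have "G.F (card (Dp 1)) 0 1 \<le> G.F (card (Dp 1)) 1 0" using vy[OF y3D(1)] y3D(2) vx by simp
    then show "0 \<le> G.Delta0" using G.b_first by simp
  next
    assume d: "0 \<le> G.Delta0"
    show "maximizes_at D dwk (Dp 1) x"
      unfolding maximizes_iff
    proof (intro conjI ballI)
      show "x \<in> D - Dp 1" by (rule xD(1))
      fix y assume yD: "y \<in> D - Dp 1"
      have "pop y = 2 \<or> pop y = 3" using yD pop_cases[of y] unfolding popset_def by auto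
      then show "dwk (insert y (Dp 1)) (D - insert y (Dp 1)) \<le> dwk (insert x (Dp 1)) (D - insert x (Dp 1))"
        using vy[OF yD] vx G.b_first d by auto
    qed
  qed
qed

context
  assumes d: "0 \<le> G.Delta0" and c2: "c (card (Dp 1) + 1) \<in> Dp 2"
begin

lemma claim_b2:
  "j \<le> card (Dp 2) \<Longrightarrow> Dp 1 \<subseteq> C1_of c (card (Dp 1) + j) \<and> C1_of c (card (Dp 1) + j) \<subseteq> Dp 1 \<union> Dp 2"
proof (induction j)
  case 0 then show ?case using C1_N1 by simp
next
  case (Suc j)
  define N1 where "N1 = card (Dp 1)"
  show ?case
  proof (cases "j = 0")
    case True then show ?thesis using C1_N1 c2 by (auto simp: C1_of_Suc N1_def)
  next
    case False
    then have j: "1 \<le> j" "Suc j \<le> card (Dp 2)" using Suc.prems by auto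
    define C where "C = C1_of c (N1 + j)"
    have IH: "Dp 1 \<subseteq> C" "C \<subseteq> Dp 1 \<union> Dp 2" using Suc.IH j unfolding C_def N1_def by auto
    have rD: "Suc (N1 + j) \<le> card D - 1" using j card_D card_Dp_pos[of 3] unfolding N1_def by auto
    have st: "C \<subseteq> D" "card C = N1 + j" using run_struct[OF run, of "N1 + j"] rD unfolding C_def by auto
    have m: "maximizes_at D dwk C (c (Suc (N1 + j)))" using run_max[OF run rD] unfolding C_def .
    have cn: "cnt C 1 = N1" "cnt C 2 = j" "cnt C 3 = 0" using cnt_sub12[OF IH] st unfolding N1_def by auto
    define z where "z = c (Suc (N1 + j))"
    have "z \<in> Dp 2"
    proof (rule ccontr)
      assume nz: "z \<notin> Dp 2"
      have zD: "z \<in> D - C" using m unfolding maximizes_iff z_def by blast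
      have pz: "pop z = 3" using zD IH(1) nz pop_cases[of z] unfolding popset_def by auto
      have finC: "finite C" using st(1) finD finite_subset by blast
      have "\<not> Dp 2 \<subseteq> C"
      proof
        assume "Dp 2 \<subseteq> C"
        then have "cnt C 2 = card (Dp 2)" by (rule cnt_full[OF st(1)])
        then show False using cn j by simp
      qed
      then obtain y where y: "y \<in> Dp 2" "y \<notin> C" by blast
      have py: "pop y = 2" using y(1) unfolding popset_def by simp
      have yD: "y \<in> D - C" using y Dp_sub by auto
      have lt: "card C + 1 < card D" using st rD by linarith
      have vy: "dwk (insert y C) (D - insert y C) = G.F (real N1) (real j + 1) 0"
        using val_ins[OF st(1) yD lt] unfolding cn py by simp
      have vz: "dwk (insert z C) (D - insert z C) = G.F (real N1) (real j) 1"
        using val_ins[OF st(1) zD lt] unfolding cn pz by simp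
      have le: "dwk (insert y C) (D - insert y C) \<le> dwk (insert z C) (D - insert z C)"
        using m yD unfolding maximizes_iff z_def by blast
      have "G.F (real N1) (real j) 1 < G.F (real N1) (real j + 1) 0"
        unfolding N1_def by (rule G.b_step) (use d j in auto)
      then show False using le vy vz by linarith
    qed
    then show ?thesis using IH unfolding C_def z_def by (auto simp: C1_of_Suc N1_def)
  qed
qed

lemma ph2_val:
  assumes j: "j \<le> card (Dp 2)"
  shows "dwk (C1_of c (card (Dp 1) + j)) (D - C1_of c (card (Dp 1) + j)) = G.F (card (Dp 1)) (real j) 0"
proof -
  have rD: "card (Dp 1) + j \<le> card D - 1" using j card_D card_Dp_pos[of 3] by auto
  have st: "C1_of c (card (Dp 1) + j) \<subseteq> D" "card (C1_of c (card (Dp 1) + j)) = card (Dp 1) + j"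
    using run_struct[OF run rD] by auto
  have cn: "cnt (C1_of c (card (Dp 1) + j)) 1 = card (Dp 1)" "cnt (C1_of c (card (Dp 1) + j)) 2 = j"
    "cnt (C1_of c (card (Dp 1) + j)) 3 = 0"
    using cnt_sub12 claim_b2[OF j] st by auto
  show ?thesis using val_C[OF st(1)] st rD card_Dp_pos[of 1] cn by auto
qed

lemma claim_b2_pop:
  assumes r: "r \<in> {card (Dp 1) + 1..card (Dp 1) + card (Dp 2)}"
  shows "c r \<in> Dp 2"
proof -
  define j where "j = r - card (Dp 1) - 1"
  have rj: "r = Suc (card (Dp 1) + j)" "Suc j \<le> card (Dp 2)" using r unfolding j_def by auto
  have rD: "Suc (card (Dp 1) + j) \<le> card D - 1" using rj card_D card_Dp_pos[of 3] by auto
  have "c r \<in> D - C1_of c (card (Dp 1) + j)"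
    using run_max[OF run rD] rj unfolding maximizes_iff by blast
  moreover have "Dp 1 \<subseteq> C1_of c (card (Dp 1) + j)" using claim_b2[of j] rj by auto
  moreover have "c r \<in> Dp 1 \<union> Dp 2" using claim_b2[of "Suc j"] rj C1_of_mem[of r c] by auto
  ultimately show ?thesis by auto
qed

lemma claim_b2_convex:
  assumes r: "card (Dp 1) < r" "r < card (Dp 1) + card (Dp 2)"
  shows "2 * dwk (C1_of c r) (D - C1_of c r) \<le> dwk (C1_of c (r - 1)) (D - C1_of c (r - 1)) + dwk (C1_of c (r + 1)) (D - C1_of c (r + 1))"
proof -
  define N1 where "N1 = card (Dp 1)"
  define j where "j = r - N1"
  have j: "r = N1 + j" "1 \<le> j" "j + 1 \<le> card (Dp 2)" using r unfolding j_def N1_def by auto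
  have e1: "dwk (C1_of c r) (D - C1_of c r) = G.F N1 (real j) 0" using ph2_val[of j] j unfolding N1_def by auto
  have e0: "dwk (C1_of c (r - 1)) (D - C1_of c (r - 1)) = G.F N1 (real j - 1) 0"
    using ph2_val[of "j - 1"] j unfolding N1_def by (auto simp: of_nat_diff)
  have e2: "dwk (C1_of c (r + 1)) (D - C1_of c (r + 1)) = G.F N1 (real j + 1) 0"
    using ph2_val[of "j + 1"] j unfolding N1_def by (auto simp: add.assoc add.commute)
  have "2 * G.F N1 (real r - N1) 0 \<le> G.F N1 (real r - 1 - N1) 0 + G.F N1 (real r + 1 - N1) 0"
    unfolding N1_def by (rule G.b_convex) (use j N1_def in auto)
  then show ?thesis unfolding e0 e1 e2 using j by (simp add: algebra_simps)
qed

lemma C1_N12: "C1_of c (card (Dp 1) + card (Dp 2)) = Dp 1 \<union> Dp 2"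
proof -
  have rD: "card (Dp 1) + card (Dp 2) \<le> card D - 1" using card_D card_Dp_pos[of 3] by auto
  have s: "C1_of c (card (Dp 1) + card (Dp 2)) \<subseteq> Dp 1 \<union> Dp 2" using claim_b2[of "card (Dp 2)"] by auto
  have "card (Dp 1 \<union> Dp 2) = card (Dp 1) + card (Dp 2)"
    using Dp_fin by (intro card_Un_disjoint) (auto simp: popset_def)
  moreover have "card (C1_of c (card (Dp 1) + card (Dp 2))) = card (Dp 1) + card (Dp 2)"
    using run_struct[OF run rD] by auto
  ultimately show ?thesis using card_subset_eq[OF _ s] Dp_fin by auto
qed

lemma ph3_val:
  assumes r: "card (Dp 1) + card (Dp 2) \<le> r" "r \<le> card D - 1"
  shows "dwk (C1_of c r) (D - C1_of c r) = G.F (card (Dp 1)) (card (Dp 2)) (real (r - card (Dp 1) - card (Dp 2)))"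
proof -
  have st: "C1_of c r \<subseteq> D" "card (C1_of c r) = r" using run_struct[OF run r(2)] by auto
  have "Dp 1 \<union> Dp 2 \<subseteq> C1_of c r" using C1_of_mono[OF r(1), of c] C1_N12 by simp
  then have cn: "cnt (C1_of c r) 1 = card (Dp 1)" "cnt (C1_of c r) 2 = card (Dp 2)" "cnt (C1_of c r) 3 = r - card (Dp 1) - card (Dp 2)"
    using cnt_sup12 st by auto
  have "card (C1_of c r) \<ge> 1" using st r card_Dp_pos[of 1] by auto
  moreover have "card (C1_of c r) < card D" using st r card_Dp_pos[of 1] three_ge by auto
  ultimately show ?thesis using val_C[OF st(1)] cn by simp
qed

lemma claim_c:
  assumes r: "card (Dp 1) + card (Dp 2) \<le> r" "r + 1 \<le> card D - 1"
  shows "dwk (C1_of c (r + 1)) (D - C1_of c (r + 1)) < dwk (C1_of c r) (D - C1_of c r)"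
proof -
  define m where "m = r - card (Dp 1) - card (Dp 2)"
  have e0: "dwk (C1_of c r) (D - C1_of c r) = G.F (card (Dp 1)) (card (Dp 2)) (real m)"
    using ph3_val[of r] r unfolding m_def by auto
  have mm: "r + 1 - card (Dp 1) - card (Dp 2) = Suc m" using r unfolding m_def by auto
  have e1: "dwk (C1_of c (r + 1)) (D - C1_of c (r + 1)) = G.F (card (Dp 1)) (card (Dp 2)) (real m + 1)"
  proof -
    have "dwk (C1_of c (r + 1)) (D - C1_of c (r + 1)) = G.F (card (Dp 1)) (card (Dp 2)) (real (Suc m))"
      by (rule ph3_val[of "r + 1", unfolded mm]) (use r in auto)
    then show ?thesis by (simp add: add.commute)
  qed
  have "real m + 1 \<le> real (card (Dp 3)) - 1" using r card_D unfolding m_def by auto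
  then have "G.F (card (Dp 1)) (card (Dp 2)) (real m + 1) < G.F (card (Dp 1)) (card (Dp 2)) (real m)"
    using G.c_step[OF G.g33_pos[OF d], of "real m"] by simp
  then show ?thesis using e0 e1 by simp
qed

end
end

end


theorem lemma2:
  fixes k :: "'a::{metric_space, second_countable_topology} \<Rightarrow> 'a \<Rightarrow> real"
    and D :: "'o set" and pop :: "'o \<Rightarrow> nat" and X :: "'o \<Rightarrow> 'a"
    and n1 n2 n3 :: nat and d12 d13 d23 :: real
  defines "D1 \<equiv> popset pop D 1" and "D2 \<equiv> popset pop D 2" and "D3 \<equiv> popset pop D 3"
  defines "dw \<equiv> dw_star k pop X D"
  assumes char: "characteristic_kernel k"
    and finD: "finite D"
    and pops: "\<forall>ob \<in> D. pop ob \<in> {1, 2, 3}"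
    and n1_def: "n1 = card D1" and n2_def: "n2 = card D2" and n3_def: "n3 = card D3"
    and ne: "n1 \<ge> 1" "n2 \<ge> 1" "n3 \<ge> 1"
    and distinct: "emp_pmf X D1 \<noteq> emp_pmf X D2" "emp_pmf X D1 \<noteq> emp_pmf X D3"
                  "emp_pmf X D2 \<noteq> emp_pmf X D3"
    and d12_def: "d12 = mmd2 k (measure_pmf (emp_pmf X D1)) (measure_pmf (emp_pmf X D2))"
    and d13_def: "d13 = mmd2 k (measure_pmf (emp_pmf X D1)) (measure_pmf (emp_pmf X D3))"
    and d23_def: "d23 = mmd2 k (measure_pmf (emp_pmf X D2)) (measure_pmf (emp_pmf X D3))"
  defines "A1 \<equiv> (real n2 - real n1) * d12 + real n3 * (d13 - d23) \<ge> 0"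
    and "A2 \<equiv> (real n3 - real n1) * d13 + real n2 * (d12 - d23) \<ge> 0"
    and "A3 \<equiv> real n1 * (real n2 + real n3 - 1) * (d13 - d12)
               + (real n3 - real n2) * (real n1 + 1) * d23 \<ge> 0"
  shows
    \<comment> \<open>(a), first part\<close>
    "(\<forall>x \<in> D1. maximizes_at D dw {} x \<longleftrightarrow> A1 \<and> A2) \<and>
     (\<forall>c. BS_star_run D dw c \<and> A1 \<and> A2 \<and> c 1 \<in> D1 \<longrightarrow>
        \<comment> \<open>(a), second part\<close>
        (\<forall>r \<in> {1..n1}. c r \<in> D1) \<and>
        (\<forall>r \<in> {1..<n1}. dw (C1_of c r) (D - C1_of c r) < dw (C1_of c (Suc r)) (D - C1_of c (Suc r))) \<and>
        \<comment> \<open>(b), first part\<close>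
        (\<forall>x \<in> D2. maximizes_at D dw (C1_of c n1) x \<longleftrightarrow> A3) \<and>
        (A3 \<and> c (n1 + 1) \<in> D2 \<longrightarrow>
          \<comment> \<open>(b), second part\<close>
          (\<forall>r \<in> {n1 + 1..n1 + n2}. c r \<in> D2) \<and>
          (\<forall>r. n1 < r \<and> r < n1 + n2 \<longrightarrow>
             2 * dw (C1_of c r) (D - C1_of c r)
               \<le> dw (C1_of c (r - 1)) (D - C1_of c (r - 1))
                 + dw (C1_of c (r + 1)) (D - C1_of c (r + 1))) \<and>
          \<comment> \<open>(c)\<close>
          (\<forall>r. n1 + n2 \<le> r \<and> r + 1 \<le> card D - 1 \<longrightarrow>
             dw (C1_of c (r + 1)) (D - C1_of c (r + 1)) < dw (C1_of c r) (D - C1_of c r))))"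
proof -
  have ne1: "popset pop D 1 \<noteq> {}" using ne(1) n1_def unfolding D1_def by auto
  have ne2: "popset pop D 2 \<noteq> {}" using ne(2) n2_def unfolding D2_def by auto
  have ne3: "popset pop D 3 \<noteq> {}" using ne(3) n3_def unfolding D3_def by auto
  interpret M: main_ctx D pop X k
  proof unfold_locales
    show "finite D" by (rule finD)
    show "\<forall>ob\<in>D. pop ob \<in> {1, 2, 3}" by (rule pops)
    show "\<And>i. i \<in> {1, 2, 3} \<Longrightarrow> popset pop D i \<noteq> {}" using ne1 ne2 ne3 by auto
    show "characteristic_kernel k" by (rule char)
    show "emp_pmf X (popset pop D 1) \<noteq> emp_pmf X (popset pop D 2)" using distinct(1) unfolding D1_def D2_def .
    show "emp_pmf X (popset pop D 1) \<noteq> emp_pmf X (popset pop D 3)" using distinct(2) unfolding D1_def D3_def .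
    show "emp_pmf X (popset pop D 2) \<noteq> emp_pmf X (popset pop D 3)" using distinct(3) unfolding D2_def D3_def .
  qed
  have nn: "real n1 = real (card (popset pop D 1))" "real n2 = real (card (popset pop D 2))" "real n3 = real (card (popset pop D 3))"
    unfolding n1_def n2_def n3_def D1_def D2_def D3_def by simp_all
  have dd: "d12 = M.G.d12" "d13 = M.G.d13" "d23 = M.G.d23"
    using M.d_eq unfolding d12_def d13_def d23_def D1_def D2_def D3_def by simp_all
  have nnpos: "M.G.nn > 0" by (rule M.G.nn_pos)
  have A1_iff: "A1 \<longleftrightarrow> M.G.g22 \<le> M.G.g11"
  proof -
    have "A1 \<longleftrightarrow> 0 \<le> M.G.nn * (M.G.g11 - M.G.g22)" unfolding A1_def dd nn M.G.A1id by simp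
    also have "\<dots> \<longleftrightarrow> M.G.g22 \<le> M.G.g11" using nnpos by (simp add: zero_le_mult_iff)
    finally show ?thesis .
  qed
  have A2_iff: "A2 \<longleftrightarrow> M.G.g33 \<le> M.G.g11"
  proof -
    have "A2 \<longleftrightarrow> 0 \<le> M.G.nn * (M.G.g11 - M.G.g33)" unfolding A2_def dd nn M.G.A2id by simp
    also have "\<dots> \<longleftrightarrow> M.G.g33 \<le> M.G.g11" using nnpos by (simp add: zero_le_mult_iff)
    finally show ?thesis .
  qed
  have A3_iff: "A3 \<longleftrightarrow> 0 \<le> M.G.Delta0"
  proof -
    have "A3 \<longleftrightarrow> 0 \<le> M.G.nn * M.G.Delta0" unfolding A3_def dd nn M.G.A3id M.G.Delta0_def by simp
    also have "\<dots> \<longleftrightarrow> 0 \<le> M.G.Delta0" using nnpos by (simp add: zero_le_mult_iff)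
    finally show ?thesis .
  qed
  have cD: "card D = n1 + n2 + n3" using M.card_D unfolding n1_def n2_def n3_def D1_def D2_def D3_def .
  have dwe: "dw = M.dwk" unfolding dw_def ..
  show ?thesis
  proof (intro conjI allI impI ballI)
    fix x assume "x \<in> D1"
    then show "maximizes_at D dw {} x \<longleftrightarrow> A1 \<and> A2"
      unfolding dwe A1_iff A2_iff D1_def by (rule M.claim_a1)
  next
    fix c assume H: "BS_star_run D dw c \<and> A1 \<and> A2 \<and> c 1 \<in> D1"
    then have run: "BS_star_run D M.dwk c" and g: "M.G.g22 \<le> M.G.g11" "M.G.g33 \<le> M.G.g11"
      and c1: "c 1 \<in> popset pop D 1"
      unfolding dwe A1_iff A2_iff D1_def by auto
    {
      fix r assume r: "r \<in> {1..n1}"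
      then have "C1_of c r \<subseteq> popset pop D 1" using M.claim_a2[OF run g c1, of r] unfolding n1_def D1_def by auto
      then show "c r \<in> D1" using M.C1_of_mem[of r c] r unfolding D1_def by auto
    next
      fix r assume r: "r \<in> {1..<n1}"
      show "dw (C1_of c r) (D - C1_of c r) < dw (C1_of c (Suc r)) (D - C1_of c (Suc r))"
        unfolding dwe using M.claim_a3[OF run g c1, of r] r unfolding n1_def D1_def by auto
    next
      fix x assume "x \<in> D2"
      then show "maximizes_at D dw (C1_of c n1) x \<longleftrightarrow> A3"
        unfolding dwe A3_iff n1_def D1_def D2_def by (rule M.claim_b1[OF run g c1])
    next
      assume H3: "A3 \<and> c (n1 + 1) \<in> D2"
      then have d: "0 \<le> M.G.Delta0" and c2: "c (card (popset pop D 1) + 1) \<in> popset pop D 2"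
        unfolding A3_iff n1_def D1_def D2_def by auto
      {
        fix r assume r: "r \<in> {n1 + 1..n1 + n2}"
        show "c r \<in> D2" using M.claim_b2_pop[OF run g c1 d c2, of r] r unfolding n1_def n2_def D1_def D2_def by auto
      next
        fix r assume r: "n1 < r \<and> r < n1 + n2"
        show "2 * dw (C1_of c r) (D - C1_of c r) \<le> dw (C1_of c (r - 1)) (D - C1_of c (r - 1)) + dw (C1_of c (r + 1)) (D - C1_of c (r + 1))"
          unfolding dwe using M.claim_b2_convex[OF run g c1 d c2, of r] r unfolding n1_def n2_def D1_def D2_def by auto
      next
        fix r assume r: "n1 + n2 \<le> r \<and> r + 1 \<le> card D - 1"
        show "dw (C1_of c (r + 1)) (D - C1_of c (r + 1)) < dw (C1_of c r) (D - C1_of c r)"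
          unfolding dwe using M.claim_c[OF run g c1 d c2, of r] r unfolding n1_def n2_def D1_def D2_def by auto
      }
    }
  qed
qed

end
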